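(* Let $I=(x_1,\ldots,x_n)$ be any list of items with sizes $x_i\in(1/3,1]$. Then $$\mathbb{E}[\mathrm{BF}(I^\sigma)] \le \frac{21}{16}\,\mathrm{OPT}(I),$$ where $\sigma$ is drawn uniformly at random from the set $\mathcal{S}_n$ of permutations of $[n]$.
   Context: Bin packing: given a list $I=(x_1,\ldots,x_n)$ of items with sizes in $(0,1]$, a packing assigns items to unit-capacity bins so that the total size of items in each bin is at most $1$. $\mathrm{OPT}(I)$ denotes the minimum number of bins in a feasible packing. The online algorithm Best Fit (BF) processes the items in the given order and packs the current item into the fullest bin (largest current load) into which it fits, opening a new bin if it fits into no existing bin; items are never moved. $\mathrm{BF}(I)$ denotes the number of bins Best Fit uses on list $I$. For $\sigma\in\mathcal{S}_n$, $I^\sigma=(x_{\sigma(1)},\ldots,x_{\sigma(n)})$. *)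

theory Defs
  imports Complex_Main "HOL-Combinatorics.Permutations"
begin

definition feasible_packing :: "real list \<Rightarrow> nat \<Rightarrow> (nat \<Rightarrow> nat) \<Rightarrow> bool" where
  "feasible_packing xs k f \<longleftrightarrow>
     (\<forall>i<length xs. f i < k) \<and>
     (\<forall>b<k. (\<Sum>i\<in>{i. i < length xs \<and> f i = b}. xs ! i) \<le> 1)"

definition OPT :: "real list \<Rightarrow> nat" where
  "OPT xs = (LEAST k. \<exists>f. feasible_packing xs k f)"

(* Best Fit on a state given as the list of current bin loads (in order of opening). *)
definition bf_step :: "real list \<Rightarrow> real \<Rightarrow> real list" where
  "bf_step loads x =
     (let fits = {j. j < length loads \<and> loads ! j + x \<le> 1} in
      if fits = {} then loads @ [x]
      else (let m = Max ((\<lambda>j. loads ! j) ` fits);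
                j0 = (LEAST j. j \<in> fits \<and> loads ! j = m)
            in loads[j0 := loads ! j0 + x]))"

definition BF :: "real list \<Rightarrow> nat" where
  "BF xs = length (foldl bf_step [] xs)"

(* I^\<sigma> = (x_{\<sigma>(1)}, ..., x_{\<sigma>(n)}), with 0-based indices *)
definition permute_list_by :: "(nat \<Rightarrow> nat) \<Rightarrow> real list \<Rightarrow> real list" where
  "permute_list_by \<sigma> xs = map (\<lambda>i. xs ! \<sigma> i) [0..<length xs]"

definition expected_BF_random_order :: "real list \<Rightarrow> real" where
  "expected_BF_random_order xs =
     (\<Sum>\<sigma>\<in>{\<sigma>. \<sigma> permutes {0..<length xs}}. real (BF (permute_list_by \<sigma> xs)))
       / real (card {\<sigma>. \<sigma> permutes {0..<length xs}})"

end

theory Submission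
  imports Defs
begin

definition ld :: "real list \<Rightarrow> nat list \<Rightarrow> real" where
  "ld xs B = sum_list (map (\<lambda>i. xs ! i) B)"

definition gstep :: "real list \<Rightarrow> nat list list \<Rightarrow> nat \<Rightarrow> nat list list" where
  "gstep xs bins i =
     (let fits = {j. j < length bins \<and> ld xs (bins ! j) + xs ! i \<le> 1} in
      if fits = {} then bins @ [[i]]
      else (let m = Max ((\<lambda>j. ld xs (bins ! j)) ` fits);
                j0 = (LEAST j. j \<in> fits \<and> ld xs (bins ! j) = m)
            in bins[j0 := i # bins ! j0]))"

lemma gstep_corr: "map (ld xs) (gstep xs bins i) = bf_step (map (ld xs) bins) (xs ! i)"
proof -
  have fe: "{j. j < length (map (ld xs) bins) \<and> map (ld xs) bins ! j + xs ! i \<le> 1}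
       = {j. j < length bins \<and> ld xs (bins ! j) + xs ! i \<le> 1}" by auto
  have im: "(\<lambda>j. map (ld xs) bins ! j) ` {j. j < length bins \<and> ld xs (bins ! j) + xs ! i \<le> 1}
     = (\<lambda>j. ld xs (bins ! j)) ` {j. j < length bins \<and> ld xs (bins ! j) + xs ! i \<le> 1}"
    by (auto simp: image_def)
  define F where "F = {j. j < length bins \<and> ld xs (bins ! j) + xs ! i \<le> 1}"
  define m where "m = Max ((\<lambda>j. ld xs (bins ! j)) ` F)"
  have le: "(LEAST j. j \<in> F \<and> map (ld xs) bins ! j = m) = (LEAST j. j \<in> F \<and> ld xs (bins ! j) = m)"
    by (rule arg_cong[where f=Least]) (auto simp: F_def fun_eq_iff)
  show ?thesis
  proof (cases "F = {}")
    case True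
    then show ?thesis unfolding gstep_def bf_step_def Let_def using fe F_def by (simp add: ld_def)
  next
    case False
    define j0 where "j0 = (LEAST j. j \<in> F \<and> ld xs (bins ! j) = m)"
    have "\<exists>j. j \<in> F \<and> ld xs (bins ! j) = m"
    proof -
      have "finite F" by (simp add: F_def)
      then have "m \<in> (\<lambda>j. ld xs (bins ! j)) ` F" unfolding m_def using False by (intro Max_in) auto
      then show ?thesis by auto
    qed
    then have j0: "j0 \<in> F" unfolding j0_def by (metis (mono_tags, lifting) LeastI)
    then have j0l: "j0 < length bins" by (simp add: F_def)
    have "gstep xs bins i = bins[j0 := i # bins ! j0]"
      unfolding gstep_def Let_def using False by (simp add: F_def[symmetric] m_def[symmetric] j0_def)
    moreover have "bf_step (map (ld xs) bins) (xs ! i) = (map (ld xs) bins)[j0 := map (ld xs) bins ! j0 + xs ! i]"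
      unfolding bf_step_def Let_def using False fe im
      by (simp add: F_def[symmetric] m_def[symmetric] j0_def le)
    ultimately show ?thesis using j0l by (simp add: map_update ld_def add.commute)
  qed
qed

lemma gstep_foldl: "map (ld xs) (foldl (gstep xs) bins is) = foldl bf_step (map (ld xs) bins) (map (\<lambda>i. xs ! i) is)"
  by (induction "is" arbitrary: bins) (simp_all add: gstep_corr)

definition gst :: "real list \<Rightarrow> (nat \<Rightarrow> nat) \<Rightarrow> nat \<Rightarrow> nat list list" where
  "gst xs \<pi> t = foldl (gstep xs) [] (map \<pi> [0..<t])"

lemma gst_0 [simp]: "gst xs \<pi> 0 = []" by (simp add: gst_def)
lemma gst_Suc: "gst xs \<pi> (Suc t) = gstep xs (gst xs \<pi> t) (\<pi> t)" by (simp add: gst_def)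

lemma BF_gst: "BF (permute_list_by \<pi> xs) = length (gst xs \<pi> (length xs))"
proof -
  have "map (ld xs) (gst xs \<pi> (length xs)) = foldl bf_step [] (permute_list_by \<pi> xs)"
    unfolding gst_def permute_list_by_def using gstep_foldl[of xs "[]" "map \<pi> [0..<length xs]"]
    by (simp add: comp_def)
  then show ?thesis unfolding BF_def by (metis length_map)
qed

lemma gstep_cases:
  "((\<forall>j<length bins. ld xs (bins ! j) + xs ! i > 1) \<and> gstep xs bins i = bins @ [[i]])
   \<or> (\<exists>j0<length bins. ld xs (bins ! j0) + xs ! i \<le> 1
        \<and> (\<forall>j<length bins. ld xs (bins ! j) + xs ! i \<le> 1 \<longrightarrow> ld xs (bins ! j) \<le> ld xs (bins ! j0))
        \<and> gstep xs bins i = bins[j0 := i # bins ! j0])"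
proof -
  define F where "F = {j. j < length bins \<and> ld xs (bins ! j) + xs ! i \<le> 1}"
  define m where "m = Max ((\<lambda>j. ld xs (bins ! j)) ` F)"
  show ?thesis
  proof (cases "F = {}")
    case True
    then show ?thesis unfolding gstep_def Let_def F_def[symmetric] by (auto simp: F_def not_le)
  next
    case False
    define j0 where "j0 = (LEAST j. j \<in> F \<and> ld xs (bins ! j) = m)"
    have fin: "finite F" by (simp add: F_def)
    have "\<exists>j. j \<in> F \<and> ld xs (bins ! j) = m"
    proof -
      have "m \<in> (\<lambda>j. ld xs (bins ! j)) ` F" unfolding m_def using False fin by (intro Max_in) auto
      then show ?thesis by auto
    qed
    then have j0: "j0 \<in> F \<and> ld xs (bins ! j0) = m" unfolding j0_def by (metis (mono_tags, lifting) LeastI)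
    have mx: "\<forall>j<length bins. ld xs (bins ! j) + xs ! i \<le> 1 \<longrightarrow> ld xs (bins ! j) \<le> ld xs (bins ! j0)"
      using j0 fin by (auto simp: m_def F_def)
    have "gstep xs bins i = bins[j0 := i # bins ! j0]"
      unfolding gstep_def Let_def using False by (simp add: F_def[symmetric] m_def[symmetric] j0_def)
    then show ?thesis using j0 mx by (auto simp: F_def)
  qed
qed

definition okx :: "real list \<Rightarrow> bool" where
  "okx xs \<longleftrightarrow> (\<forall>i<length xs. 1/3 < xs ! i \<and> xs ! i \<le> 1)"

definition good :: "real list \<Rightarrow> nat set \<Rightarrow> nat list list \<Rightarrow> bool" where
  "good xs A bins \<longleftrightarrow> mset (concat bins) = mset_set A
     \<and> (\<forall>B\<in>set bins. B \<noteq> [] \<and> length B \<le> 2 \<and> ld xs B \<le> 1)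
     \<and> (\<forall>j<length bins. \<forall>j'<length bins. j \<noteq> j' \<longrightarrow> length (bins ! j) = 1 \<longrightarrow>
            length (bins ! j') = 1 \<longrightarrow> ld xs (bins ! j) + ld xs (bins ! j') > 1)"

lemma len1_conv: "length B = Suc 0 \<Longrightarrow> B = [hd B]"
  by (cases B) auto

lemma len2_conv: "length B = 2 \<Longrightarrow> B = [B ! 0, B ! 1]"
  by (cases B; cases "tl B") auto

lemma good_set: "good xs A bins \<Longrightarrow> finite A \<Longrightarrow> set (concat bins) = A"
  unfolding good_def by (metis finite_set_mset_mset_set set_mset_mset)

lemma good_item: "good xs A bins \<Longrightarrow> finite A \<Longrightarrow> B \<in> set bins \<Longrightarrow> u \<in> set B \<Longrightarrow> u \<in> A"
  using good_set by fastforce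

lemma ld_Nil [simp]: "ld xs [] = 0" by (simp add: ld_def)
lemma ld_single [simp]: "ld xs [u] = xs ! u" by (simp add: ld_def)
lemma ld_two [simp]: "ld xs [u, v] = xs ! u + xs ! v" by (simp add: ld_def)
lemma ld_cons [simp]: "ld xs (u # B) = xs ! u + ld xs B" by (simp add: ld_def)

lemma fits_len1:
  assumes "good xs A bins" "finite A" "A \<subseteq> {..<length xs}" "okx xs"
    "j < length bins" "ld xs (bins ! j) + xs ! i \<le> 1" "i < length xs"
  shows "length (bins ! j) = 1"
proof -
  have B: "bins ! j \<in> set bins" using assms(5) by simp
  then have ne: "bins ! j \<noteq> []" "length (bins ! j) \<le> 2" using assms(1) unfolding good_def by auto
  show ?thesis
  proof (rule ccontr)
    assume "length (bins ! j) \<noteq> 1"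
    moreover have "length (bins ! j) \<noteq> 0" using ne(1) by simp
    ultimately have l2: "length (bins ! j) = 2" using ne(2) by linarith
    then have e: "bins ! j = [bins ! j ! 0, bins ! j ! 1]" by (rule len2_conv)
    have "bins ! j ! 0 \<in> set (bins ! j)" "bins ! j ! 1 \<in> set (bins ! j)" using l2 by auto
    then have "bins ! j ! 0 < length xs" "bins ! j ! 1 < length xs"
      using good_item[OF assms(1,2) B] assms(3) by auto
    then have "xs ! (bins ! j ! 0) > 1/3" "xs ! (bins ! j ! 1) > 1/3" "xs ! i > 1/3"
      using assms(4,7) unfolding okx_def by auto
    moreover have "ld xs (bins ! j) = xs ! (bins ! j ! 0) + xs ! (bins ! j ! 1)"
      by (subst e) simp
    ultimately show False using assms(6) by linarith
  qed
qed

lemma mset_concat_update: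
  "j < length bins \<Longrightarrow> mset (concat (bins[j := B])) + mset (bins ! j) = mset (concat bins) + mset B"
proof (induction bins arbitrary: j)
  case Nil then show ?case by simp
next
  case (Cons b bins)
  then show ?case by (cases j) (auto simp: add_ac)
qed

lemma good_step:
  assumes g: "good xs A bins" and fin: "finite A" and sub: "A \<subseteq> {..<length xs}" and ok: "okx xs"
    and i: "i \<notin> A" "i < length xs"
  shows "good xs (insert i A) (gstep xs bins i)"
  using gstep_cases[of bins xs i]
proof
  assume a: "(\<forall>j<length bins. ld xs (bins ! j) + xs ! i > 1) \<and> gstep xs bins i = bins @ [[i]]"
  have m: "mset (concat (bins @ [[i]])) = mset_set (insert i A)"
    using g fin i unfolding good_def by simp
  have b: "\<forall>B\<in>set (bins @ [[i]]). B \<noteq> [] \<and> length B \<le> 2 \<and> ld xs B \<le> 1"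
    using g ok i unfolding good_def okx_def by auto
  have c: "\<forall>j<length (bins @ [[i]]). \<forall>j'<length (bins @ [[i]]). j \<noteq> j' \<longrightarrow> length ((bins @ [[i]]) ! j) = 1 \<longrightarrow>
            length ((bins @ [[i]]) ! j') = 1 \<longrightarrow> ld xs ((bins @ [[i]]) ! j) + ld xs ((bins @ [[i]]) ! j') > 1"
  proof (intro allI impI)
    fix j j' assume j: "j < length (bins @ [[i]])" "j' < length (bins @ [[i]])" "j \<noteq> j'"
      "length ((bins @ [[i]]) ! j) = 1" "length ((bins @ [[i]]) ! j') = 1"
    consider "j < length bins" "j' < length bins" | "j = length bins" "j' < length bins"
      | "j < length bins" "j' = length bins" using j by (auto simp: less_Suc_eq)
    then show "ld xs ((bins @ [[i]]) ! j) + ld xs ((bins @ [[i]]) ! j') > 1"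
    proof cases
      case 1 then show ?thesis using g j unfolding good_def by (auto simp: nth_append)
    next
      case 2 then show ?thesis using a by (auto simp: nth_append add.commute)
    next
      case 3 then show ?thesis using a by (auto simp: nth_append)
    qed
  qed
  show ?thesis using a m b c unfolding good_def by simp
next
  assume "\<exists>j0<length bins. ld xs (bins ! j0) + xs ! i \<le> 1
        \<and> (\<forall>j<length bins. ld xs (bins ! j) + xs ! i \<le> 1 \<longrightarrow> ld xs (bins ! j) \<le> ld xs (bins ! j0))
        \<and> gstep xs bins i = bins[j0 := i # bins ! j0]"
  then obtain j0 where j0: "j0 < length bins" "ld xs (bins ! j0) + xs ! i \<le> 1"
    and e: "gstep xs bins i = bins[j0 := i # bins ! j0]" by blast
  have l1: "length (bins ! j0) = 1" using fits_len1[OF g fin sub ok j0 i(2)] .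
  define bins' where "bins' = bins[j0 := i # bins ! j0]"
  have m: "mset (concat bins') = mset_set (insert i A)"
    using mset_concat_update[OF j0(1), of "i # bins ! j0"] g fin i unfolding good_def bins'_def by simp
  have b: "\<forall>B\<in>set bins'. B \<noteq> [] \<and> length B \<le> 2 \<and> ld xs B \<le> 1"
  proof
    fix B assume "B \<in> set bins'"
    then obtain k where k: "k < length bins" "B = bins' ! k" unfolding bins'_def by (auto simp: in_set_conv_nth)
    show "B \<noteq> [] \<and> length B \<le> 2 \<and> ld xs B \<le> 1"
    proof (cases "k = j0")
      case True then show ?thesis using k j0 l1 by (simp add: bins'_def add.commute)
    next
      case False then have "B = bins ! k" using k by (simp add: bins'_def)
      then show ?thesis using g k unfolding good_def by auto
    qed
  qed
  have c: "\<forall>j<length bins'. \<forall>j'<length bins'. j \<noteq> j' \<longrightarrow> length (bins' ! j) = 1 \<longrightarrow>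
            length (bins' ! j') = 1 \<longrightarrow> ld xs (bins' ! j) + ld xs (bins' ! j') > 1"
  proof (intro allI impI)
    fix j j' assume j: "j < length bins'" "j' < length bins'" "j \<noteq> j'"
      "length (bins' ! j) = 1" "length (bins' ! j') = 1"
    have "j \<noteq> j0" "j' \<noteq> j0" using j l1 j0 by (auto simp: bins'_def)
    then show "ld xs (bins' ! j) + ld xs (bins' ! j') > 1"
      using g j unfolding good_def bins'_def by auto
  qed
  show ?thesis using m b c e unfolding good_def bins'_def by simp
qed

definition isLS :: "real list \<Rightarrow> nat list \<Rightarrow> bool" where
  "isLS xs B \<longleftrightarrow> length B = 2 \<and> (\<exists>u\<in>set B. xs ! u > 1/2)"

definition isS1 :: "real list \<Rightarrow> nat list \<Rightarrow> bool" where
  "isS1 xs B \<longleftrightarrow> length B = 1 \<and> (\<forall>u\<in>set B. \<not> xs ! u > 1/2)"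

definition pLS :: "real list \<Rightarrow> nat list list \<Rightarrow> nat" where
  "pLS xs bins = length (filter (isLS xs) bins)"

definition nL :: "real list \<Rightarrow> nat" where
  "nL xs = card {i. i < length xs \<and> xs ! i > 1/2}"

definition nS :: "real list \<Rightarrow> nat" where
  "nS xs = card {i. i < length xs \<and> \<not> xs ! i > 1/2}"

lemma filter_le1:
  assumes "\<forall>j<length L. \<forall>j'<length L. j \<noteq> j' \<longrightarrow> \<not> (P (L ! j) \<and> P (L ! j'))"
  shows "length (filter P L) \<le> 1"
  using assms
proof (induction L)
  case Nil then show ?case by simp
next
  case (Cons b L)
  have IH: "length (filter P L) \<le> 1"
    using Cons.prems by (intro Cons.IH) (auto, metis Suc_inject Suc_less_eq nth_Cons_Suc)
  show ?case
  proof (cases "P b")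
    case True
    have "\<forall>c\<in>set L. \<not> P c"
    proof
      fix c assume "c \<in> set L"
      then obtain k where k: "k < length L" "c = L ! k" by (auto simp: in_set_conv_nth)
      then show "\<not> P c" using Cons.prems True
        by (metis Suc_less_eq length_Cons nat.simps(3) nth_Cons_0 nth_Cons_Suc zero_less_Suc)
    qed
    then show ?thesis using True by (simp add: filter_empty_conv)
  next
    case False then show ?thesis using IH by simp
  qed
qed

lemma sum_list_count: "sum_list (map (\<lambda>B. if P B then 1 else 0) L) = length (filter P L)"
  by (induction L) auto

lemma sum_list_len_filter: "sum_list (map (\<lambda>B. length (filter P B)) L) = length (filter P (concat L))"
  by (induction L) auto

lemma len_filter_full:
  fixes bins :: "nat list list"
  assumes "mset (concat bins) = mset_set {..<n}"
  shows "length (filter P (concat bins)) = card {i. i < n \<and> P i}"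
proof -
  have "length (filter P (concat bins)) = size (filter_mset P (mset (concat bins)))"
    by (metis mset_filter size_mset)
  also have "\<dots> = size (filter_mset P (mset_set {..<n}))" using assms by simp
  also have "\<dots> = size (mset_set {i \<in> {..<n}. P i})" by (rule arg_cong[where f=size], rule filter_mset_mset_set) simp
  also have "\<dots> = card {i \<in> {..<n}. P i}" by (simp only: size_mset_set)
  also have "card {i \<in> {..<n}. P i} = card {i. i < n \<and> P i}" by (rule arg_cong[where f=card]) auto
  finally show ?thesis .
qed

lemma bin_identity:
  assumes "B \<noteq> []" "length B \<le> 2" "ld xs B \<le> 1" "set B \<subseteq> {..<length xs}" "okx xs"
  shows "2 + (if isLS xs B then 1 else 0) =
     2 * length (filter (\<lambda>u. xs ! u > 1/2) B) + length (filter (\<lambda>u. \<not> xs ! u > 1/2) B)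
       + (if isS1 xs B then 1 else 0)"
proof -
  have "length B = 1 \<or> length B = 2" using assms(1,2) by (cases B) (auto simp: le_Suc_eq)
  then show ?thesis
  proof
    assume "length B = 1"
    then have e: "B = [hd B]" by (simp add: len1_conv)
    show ?thesis by (subst (1 2 3 4) e) (auto simp: isLS_def isS1_def)
  next
    assume l2: "length B = 2"
    then have e: "B = [B ! 0, B ! 1]" by (rule len2_conv)
    have "B ! 0 < length xs" "B ! 1 < length xs" using assms(4) l2 by (auto simp: subset_iff)
    then have "xs ! (B ! 0) > 1/3" "xs ! (B ! 1) > 1/3" using assms(5) by (auto simp: okx_def)
    moreover have "xs ! (B ! 0) + xs ! (B ! 1) \<le> 1" using assms(3) by (subst (asm) e) simp
    ultimately show ?thesis using l2 by (subst (1 2 3 4) e) (auto simp: isLS_def isS1_def)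
  qed
qed

lemma final_count:
  assumes g: "good xs {..<length xs} bins" and ok: "okx xs"
  shows "2 * length bins + pLS xs bins = 2 * nL xs + nS xs + length (filter (isS1 xs) bins)"
    and "length (filter (isS1 xs) bins) \<le> 1"
proof -
  have ms: "mset (concat bins) = mset_set {..<length xs}" using g by (simp add: good_def)
  have sb: "\<And>B. B \<in> set bins \<Longrightarrow> set B \<subseteq> {..<length xs}"
    using good_item[OF g] by blast
  have "sum_list (map (\<lambda>B. 2 + (if isLS xs B then 1 else 0)) bins) =
        sum_list (map (\<lambda>B. 2 * length (filter (\<lambda>u. xs ! u > 1/2) B) + length (filter (\<lambda>u. \<not> xs ! u > 1/2) B)
          + (if isS1 xs B then 1 else 0)) bins)"
    using g sb ok unfolding good_def by (intro arg_cong[where f=sum_list] map_cong refl bin_identity) auto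
  also have "\<dots> = 2 * sum_list (map (\<lambda>B. length (filter (\<lambda>u. xs ! u > 1/2) B)) bins)
      + sum_list (map (\<lambda>B. length (filter (\<lambda>u. \<not> xs ! u > 1/2) B)) bins)
      + sum_list (map (\<lambda>B. if isS1 xs B then 1 else 0) bins)"
    by (simp add: sum_list_addf sum_list_const_mult)
  also have "\<dots> = 2 * nL xs + nS xs + length (filter (isS1 xs) bins)"
    unfolding sum_list_len_filter sum_list_count len_filter_full[OF ms] nL_def nS_def by simp
  moreover have "sum_list (map (\<lambda>B. 2 + (if isLS xs B then 1 else 0)) bins) = 2 * length bins + pLS xs bins"
    unfolding pLS_def by (induction bins) auto
  ultimately show "2 * length bins + pLS xs bins = 2 * nL xs + nS xs + length (filter (isS1 xs) bins)"
    by simp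
  show "length (filter (isS1 xs) bins) \<le> 1"
  proof (rule filter_le1, intro allI impI notI)
    fix j j' assume j: "j < length bins" "j' < length bins" "j \<noteq> j'" "isS1 xs (bins ! j) \<and> isS1 xs (bins ! j')"
    then have l: "length (bins ! j) = 1" "length (bins ! j') = 1" by (auto simp: isS1_def)
    then have "ld xs (bins ! j) + ld xs (bins ! j') > 1" using g j unfolding good_def by auto
    moreover have "ld xs B \<le> 1/2" if "isS1 xs B" for B
    proof -
      have "B = [hd B]" using that by (simp add: isS1_def len1_conv)
      then show ?thesis using that unfolding isS1_def by (metis ld_single list.set_intros(1) not_less)
    qed
    then have "ld xs (bins ! j) \<le> 1/2" "ld xs (bins ! j') \<le> 1/2" using j(4) by auto
    ultimately show False by linarith
  qed
qed

lemma perm_facts: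
  assumes "\<pi> permutes {..<n}" "t < n"
  shows "\<pi> t < n" "\<pi> t \<notin> \<pi> ` {..<t}" "\<pi> ` {..<Suc t} = insert (\<pi> t) (\<pi> ` {..<t})"
    "\<pi> ` {..<t} \<subseteq> {..<n}"
proof -
  show "\<pi> t < n" using assms permutes_in_image by fastforce
  show "\<pi> t \<notin> \<pi> ` {..<t}"
  proof
    assume "\<pi> t \<in> \<pi> ` {..<t}"
    then obtain j where "j < t" "\<pi> j = \<pi> t" by auto
    then show False using permutes_inj[OF assms(1)] by (metis injD less_irrefl)
  qed
  show "\<pi> ` {..<Suc t} = insert (\<pi> t) (\<pi> ` {..<t})" by (simp add: lessThan_Suc)
  show "\<pi> ` {..<t} \<subseteq> {..<n}" using assms permutes_in_image by fastforce
qed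

lemma perm_full: "\<pi> permutes {..<n} \<Longrightarrow> \<pi> ` {..<n} = {..<n}"
  by (simp add: permutes_image)

lemma gst_good:
  assumes ok: "okx xs" and p: "\<pi> permutes {..<length xs}" and t: "t \<le> length xs"
  shows "good xs (\<pi> ` {..<t}) (gst xs \<pi> t)"
  using t
proof (induction t)
  case 0 then show ?case by (simp add: good_def)
next
  case (Suc t)
  then have t: "t < length xs" by simp
  note pf = perm_facts[OF p t]
  show ?case unfolding gst_Suc pf(3)
    by (rule good_step[OF Suc.IH[OF less_imp_le[OF t]] _ pf(4) ok pf(2) pf(1)]) simp
qed

definition Mok :: "real list \<Rightarrow> (nat \<times> nat) set \<Rightarrow> bool" where
  "Mok xs M \<longleftrightarrow> finite M \<and> inj_on fst M \<and> inj_on snd M \<and>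
     (\<forall>k\<in>M. fst k < length xs \<and> snd k < length xs \<and> xs ! fst k > 1/2 \<and> \<not> xs ! snd k > 1/2
        \<and> xs ! fst k + xs ! snd k \<le> 1)"

locale stp =
  fixes xs :: "real list" and \<pi> :: "nat \<Rightarrow> nat" and M :: "(nat \<times> nat) set"
  assumes ok: "okx xs" and pp: "\<pi> permutes {..<length xs}" and mok: "Mok xs M"
begin

abbreviation "n \<equiv> length xs"
definition "Arr t = \<pi> ` {..<t}"
definition "Pend t = {k\<in>M. fst k \<in> Arr t \<and> snd k \<notin> Arr t}"
definition "Cn t = card {k\<in>M. snd k \<in> Arr t \<and> inv \<pi> (fst k) < inv \<pi> (snd k)}"
definition "InvA t bins \<longleftrightarrow> (\<exists>U f. U \<subseteq> Pend t \<and> inj_on f (Pend t - U) \<and>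
     (\<forall>k\<in>Pend t - U. [f k] \<in> set bins \<and> xs ! f k > 1/2 \<and> xs ! f k \<le> xs ! fst k)
     \<and> Cn t + card U \<le> pLS xs bins)"

lemma finM: "finite M" using mok by (simp add: Mok_def)
lemma Mprops: "k \<in> M \<Longrightarrow> fst k < n \<and> snd k < n \<and> xs ! fst k > 1/2 \<and> \<not> xs ! snd k > 1/2 \<and> xs ! fst k + xs ! snd k \<le> 1"
  using mok by (simp add: Mok_def)
lemma injf: "inj_on fst M" and injs: "inj_on snd M" using mok by (simp_all add: Mok_def)

lemma card_le1_fst: "card {k\<in>M. fst k = a \<and> Q k} \<le> 1"
proof -
  have fin: "finite {k\<in>M. fst k = a \<and> Q k}" using finM by simp
  have all: "\<forall>x\<in>{k\<in>M. fst k = a \<and> Q k}. \<forall>y\<in>{k\<in>M. fst k = a \<and> Q k}. x = y"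
    using injf by (auto simp: inj_on_def)
  show ?thesis unfolding One_nat_def card_le_Suc0_iff_eq[OF fin] by (rule all)
qed

lemma card_le1_snd: "card {k\<in>M. snd k = a \<and> Q k} \<le> 1"
proof -
  have fin: "finite {k\<in>M. snd k = a \<and> Q k}" using finM by simp
  have all: "\<forall>x\<in>{k\<in>M. snd k = a \<and> Q k}. \<forall>y\<in>{k\<in>M. snd k = a \<and> Q k}. x = y"
    using injs by (auto simp: inj_on_def)
  show ?thesis unfolding One_nat_def card_le_Suc0_iff_eq[OF fin] by (rule all)
qed

lemma inv_pos:
  assumes "t < n" "a \<in> Arr t" shows "inv \<pi> a < inv \<pi> (\<pi> t)"
proof -
  obtain j where "j < t" "a = \<pi> j" using assms by (auto simp: Arr_def)
  then show ?thesis using permutes_inverses(2)[OF pp] by simp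
qed

lemma Cn_Suc:
  assumes t: "t < n"
  shows "Cn (Suc t) = Cn t + card {k\<in>M. snd k = \<pi> t \<and> fst k \<in> Arr t}"
proof -
  note pf = perm_facts[OF pp t]
  let ?O = "{k\<in>M. snd k \<in> Arr t \<and> inv \<pi> (fst k) < inv \<pi> (snd k)}"
  let ?K = "{k\<in>M. snd k = \<pi> t \<and> fst k \<in> Arr t}"
  have "{k\<in>M. snd k \<in> Arr (Suc t) \<and> inv \<pi> (fst k) < inv \<pi> (snd k)} = ?O \<union> ?K"
  proof (intro set_eqI iffI)
    fix k assume k: "k \<in> {k\<in>M. snd k \<in> Arr (Suc t) \<and> inv \<pi> (fst k) < inv \<pi> (snd k)}"
    show "k \<in> ?O \<union> ?K"
    proof (cases "snd k = \<pi> t")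
      case True
      have "fst k < n" using Mprops k by blast
      then have "\<pi> (inv \<pi> (fst k)) = fst k" "inv \<pi> (fst k) < t"
        using k True permutes_inverses(1)[OF pp] permutes_inverses(2)[OF pp] by auto
      then have "fst k \<in> Arr t" unfolding Arr_def by (metis image_eqI lessThan_iff)
      then show ?thesis using k True by auto
    next
      case False
      have "snd k \<in> Arr (Suc t)" using k by blast
      then have "snd k \<in> Arr t" using False pf(3) unfolding Arr_def by blast
      then show ?thesis using k by blast
    qed
  next
    fix k assume k: "k \<in> ?O \<union> ?K"
    have sub: "Arr t \<subseteq> Arr (Suc t)" by (auto simp: Arr_def)
    have "\<pi> t \<in> Arr (Suc t)" by (auto simp: Arr_def)
    show "k \<in> {k\<in>M. snd k \<in> Arr (Suc t) \<and> inv \<pi> (fst k) < inv \<pi> (snd k)}"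
    proof (cases "k \<in> ?O")
      case True then show ?thesis using sub by blast
    next
      case False
      then have "k \<in> M" "snd k = \<pi> t" "fst k \<in> Arr t" using k by blast+
      then show ?thesis using inv_pos[OF t, of "fst k"] \<open>\<pi> t \<in> Arr (Suc t)\<close> by simp
    qed
  qed
  then have "Cn (Suc t) = card (?O \<union> ?K)" unfolding Cn_def by (rule arg_cong)
  moreover have dj: "?O \<inter> ?K = {}"
  proof (rule ccontr)
    assume "?O \<inter> ?K \<noteq> {}"
    then obtain k where "k \<in> ?O \<inter> ?K" by blast
    then have "snd k \<in> Arr t" "snd k = \<pi> t" by blast+
    then show False using pf(2) unfolding Arr_def by simp
  qed
  moreover have f1: "finite ?O" using finM by simp
  moreover have f2: "finite ?K" using finM by simp
  ultimately have "Cn (Suc t) = card ?O + card ?K" using card_Un_disjoint[OF f1 f2 dj] by simp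
  then show ?thesis by (simp only: Cn_def)
qed


lemma finPend: "finite (Pend t)" using finM by (simp add: Pend_def)

lemma set_update_keep: "x \<in> set L \<Longrightarrow> x \<noteq> L ! j \<Longrightarrow> x \<in> set (L[j := y])"
  by (metis in_set_conv_nth length_list_update nth_list_update_neq)

lemma pLS_update:
  "j < length L \<Longrightarrow> pLS xs (L[j := y]) + (if isLS xs (L ! j) then 1 else 0) = pLS xs L + (if isLS xs y then 1 else 0)"
  unfolding pLS_def
proof (induction L arbitrary: j)
  case Nil then show ?case by simp
next
  case (Cons b L) then show ?case by (cases j) auto
qed

lemma InvA_I:
  assumes "Pend t - U = Q" "U \<subseteq> Pend t" "inj_on f Q"
    "\<forall>k\<in>Q. [f k] \<in> set bins \<and> xs ! f k > 1/2 \<and> xs ! f k \<le> xs ! fst k"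
    "Cn t + card U \<le> pLS xs bins"
  shows "InvA t bins"
  unfolding InvA_def using assms by blast

lemma InvA_step:
  assumes t: "t < n" and g: "good xs (Arr t) bins" and ia: "InvA t bins"
  shows "InvA (Suc t) (gstep xs bins (\<pi> t))"
proof -
  define i where "i = \<pi> t"
  define A where "A = Arr t"
  note pf = perm_facts[OF pp t]
  have i: "i < n" "i \<notin> A" using pf by (simp_all add: i_def A_def Arr_def)
  have AS: "Arr (Suc t) = insert i A" using pf(3) by (simp add: i_def A_def Arr_def)
  have Asub: "A \<subseteq> {..<n}" using pf(4) by (simp add: A_def Arr_def)
  have finA: "finite A" by (simp add: A_def Arr_def)
  have gA: "good xs A bins" using g by (simp add: A_def)
  obtain U f where U: "U \<subseteq> Pend t" and fi: "inj_on f (Pend t - U)"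
    and cov: "\<And>k. k \<in> Pend t - U \<Longrightarrow> [f k] \<in> set bins \<and> xs ! f k > 1/2 \<and> xs ! f k \<le> xs ! fst k"
    and cnt: "Cn t + card U \<le> pLS xs bins"
    using ia unfolding InvA_def by blast
  define Kc where "Kc = {k\<in>M. snd k = i \<and> fst k \<in> A}"
  define Nw where "Nw = {k\<in>M. fst k = i \<and> snd k \<notin> A}"
  have cKc: "card Kc \<le> 1" unfolding Kc_def by (rule card_le1_snd)
  have cNw: "card Nw \<le> 1" unfolding Nw_def by (rule card_le1_fst)
  have finKc: "finite Kc" "finite Nw" using finM by (simp_all add: Kc_def Nw_def)
  have finU: "finite U" using U finPend finite_subset by blast
  have CnS: "Cn (Suc t) = Cn t + card Kc" using Cn_Suc[OF t] by (simp add: Kc_def i_def A_def)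
  have KcP: "Kc \<subseteq> Pend t" using i(2) by (auto simp: Kc_def Pend_def A_def)
  have NwP: "Nw \<inter> Pend t = {}" using i(2) by (auto simp: Nw_def Pend_def A_def)
  have PS: "Pend (Suc t) = (Pend t - Kc) \<union> Nw"
  proof (intro set_eqI iffI)
    fix k assume k: "k \<in> Pend (Suc t)"
    then have kM: "k \<in> M" and k1: "fst k \<in> insert i A" and k2: "snd k \<notin> insert i A"
      unfolding Pend_def AS by auto
    show "k \<in> (Pend t - Kc) \<union> Nw"
    proof (cases "fst k = i")
      case True then show ?thesis using kM k2 by (simp add: Nw_def)
    next
      case False then show ?thesis using kM k1 k2 by (auto simp: Pend_def Kc_def A_def)
    qed
  next
    fix k assume k: "k \<in> (Pend t - Kc) \<union> Nw"
    have ne: "k \<in> M \<Longrightarrow> fst k \<noteq> snd k" using Mprops by fastforce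
    show "k \<in> Pend (Suc t)"
    proof (cases "k \<in> Nw")
      case True then show ?thesis using ne by (auto simp: Nw_def Pend_def AS)
    next
      case False then show ?thesis using k by (auto simp: Pend_def Kc_def AS A_def)
    qed
  qed
  have covA: "\<And>k. k \<in> Pend t - U \<Longrightarrow> f k \<in> A"
    using cov good_item[OF gA finA] by (meson list.set_intros(1))
  have covn: "\<And>k. k \<in> Pend t - U \<Longrightarrow> f k < n" using covA Asub by blast
  have Kc_small: "xs ! i > 1/2 \<Longrightarrow> Kc = {}" using Mprops by (auto simp: Kc_def)
  have Nw_large: "\<not> xs ! i > 1/2 \<Longrightarrow> Nw = {}" using Mprops by (auto simp: Nw_def)
  have Kcfit: "\<And>k. k \<in> Kc \<Longrightarrow> xs ! fst k + xs ! i \<le> 1" using Mprops by (auto simp: Kc_def)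
  have PA: "\<And>k. k \<in> Pend t \<Longrightarrow> fst k \<in> A" by (simp add: Pend_def A_def)
  have in_bins: "\<And>v. [v] \<in> set bins \<Longrightarrow> \<exists>m<length bins. bins ! m = [v]" by (simp add: in_set_conv_nth)
  show ?thesis
  using gstep_cases[of bins xs i]
  proof
    assume a: "(\<forall>j<length bins. ld xs (bins ! j) + xs ! i > 1) \<and> gstep xs bins i = bins @ [[i]]"
    have nofit: "\<And>v. [v] \<in> set bins \<Longrightarrow> xs ! v + xs ! i > 1" using a in_bins by fastforce
    have pl: "pLS xs (bins @ [[i]]) = pLS xs bins" by (simp add: pLS_def isLS_def)
    have ea: "gstep xs bins (\<pi> t) = bins @ [[i]]" using a by (simp add: i_def)
    show ?thesis
    proof (cases "xs ! i > 1/2")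
      case True
      define f' where "f' = (\<lambda>k. if fst k = i then i else f k)"
      have Kc0: "Kc = {}" using Kc_small True by simp
      have PS': "Pend (Suc t) - U = (Pend t - U) \<union> Nw" using PS Kc0 NwP U by auto
      have "inj_on f' ((Pend t - U) \<union> Nw)"
      proof (rule inj_onI)
        fix k1 k2 assume k1: "k1 \<in> (Pend t - U) \<union> Nw" and k2: "k2 \<in> (Pend t - U) \<union> Nw" and e: "f' k1 = f' k2"
        show "k1 = k2"
        proof (cases "k1 \<in> Nw")
          case True note t1 = this
          show ?thesis
          proof (cases "k2 \<in> Nw")
            case True then show ?thesis using t1 injf by (auto simp: Nw_def inj_on_def)
          next
            case False
            then have "k2 \<in> Pend t - U" using k2 by blast
            moreover from this have "fst k2 \<noteq> i" using PA[of k2] i(2) by blast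
            ultimately have "k2 \<in> Pend t - U" "fst k2 \<noteq> i" by blast+
            then have "k2 \<in> Pend t - U" "fst k2 \<noteq> i" by blast+
            moreover have "f k2 \<noteq> i" using covA[OF \<open>k2 \<in> Pend t - U\<close>] i(2) by blast
            ultimately show ?thesis using e t1 by (auto simp: f'_def Nw_def)
          qed
        next
          case False
          have k1P': "k1 \<in> Pend t - U" using k1 False by blast
          then have k1P: "k1 \<in> Pend t - U" "fst k1 \<noteq> i" using PA[of k1] i(2) by blast+
          show ?thesis
          proof (cases "k2 \<in> Nw")
            case True
            have "f k1 \<in> A" using covA[OF k1P(1)] .
            then have "f k1 \<noteq> i" using i(2) by blast
            then show ?thesis using e k1P True by (auto simp: f'_def Nw_def)
          next
            case False
            then have "k2 \<in> Pend t - U" using k2 by blast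
            moreover from this have "fst k2 \<noteq> i" using PA[of k2] i(2) by blast
            ultimately have "k2 \<in> Pend t - U" "fst k2 \<noteq> i" by blast+
            then have "k2 \<in> Pend t - U" "fst k2 \<noteq> i" by blast+
            then show ?thesis using e k1P fi by (auto simp: f'_def inj_on_def)
          qed
        qed
      qed
      moreover have "\<forall>k\<in>(Pend t - U) \<union> Nw. [f' k] \<in> set (bins @ [[i]]) \<and> xs ! f' k > 1/2 \<and> xs ! f' k \<le> xs ! fst k"
      proof
        fix k assume k: "k \<in> (Pend t - U) \<union> Nw"
        show "[f' k] \<in> set (bins @ [[i]]) \<and> xs ! f' k > 1/2 \<and> xs ! f' k \<le> xs ! fst k"
        proof (cases "k \<in> Nw")
          case True then show ?thesis using \<open>xs ! i > 1/2\<close> by (auto simp: f'_def Nw_def)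
        next
          case False
          then have "k \<in> Pend t - U" using k by blast
            moreover from this have "fst k \<noteq> i" using PA[of k] i(2) by blast
            ultimately have "k \<in> Pend t - U" "fst k \<noteq> i" by blast+
            then have "k \<in> Pend t - U" "fst k \<noteq> i" by blast+
          then show ?thesis using cov by (auto simp: f'_def)
        qed
      qed
      moreover have "Cn (Suc t) + card U \<le> pLS xs (bins @ [[i]])" using CnS Kc0 cnt pl by simp
      moreover have "U \<subseteq> Pend (Suc t)" using U PS Kc0 by auto
      ultimately show ?thesis unfolding ea by (intro InvA_I[OF PS']) auto
    next
      case False
      have Nw0: "Nw = {}" using Nw_large False by simp
      have KcU: "Kc \<subseteq> U"
      proof
        fix k assume k: "k \<in> Kc"
        show "k \<in> U"
        proof (rule ccontr)
          assume "k \<notin> U"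
          then have kP: "k \<in> Pend t - U" using k KcP by auto
          then have "xs ! f k + xs ! i \<le> 1" using cov Kcfit[OF k] by fastforce
          then show False using nofit cov kP by fastforce
        qed
      qed
      have PS': "Pend (Suc t) - (U - Kc) = Pend t - U" using PS Nw0 KcU U by auto
      have "card (U - Kc) + card Kc = card U" using KcU finU card_Diff_subset finKc(1)
        by (metis card_mono le_add_diff_inverse2)
      then have "Cn (Suc t) + card (U - Kc) \<le> pLS xs (bins @ [[i]])" using CnS cnt pl by simp
      moreover have "U - Kc \<subseteq> Pend (Suc t)" using U PS by auto
      ultimately show ?thesis unfolding ea using fi cov by (intro InvA_I[OF PS']) auto
    qed
  next
    assume "\<exists>j0<length bins. ld xs (bins ! j0) + xs ! i \<le> 1
        \<and> (\<forall>j<length bins. ld xs (bins ! j) + xs ! i \<le> 1 \<longrightarrow> ld xs (bins ! j) \<le> ld xs (bins ! j0))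
        \<and> gstep xs bins i = bins[j0 := i # bins ! j0]"
    then obtain j0 where j0: "j0 < length bins" "ld xs (bins ! j0) + xs ! i \<le> 1"
      and mx: "\<And>j. j < length bins \<Longrightarrow> ld xs (bins ! j) + xs ! i \<le> 1 \<Longrightarrow> ld xs (bins ! j) \<le> ld xs (bins ! j0)"
      and e: "gstep xs bins i = bins[j0 := i # bins ! j0]" by blast
    have l1: "length (bins ! j0) = 1" using fits_len1[OF gA finA Asub ok j0 i(1)] .
    define u where "u = hd (bins ! j0)"
    have bu: "bins ! j0 = [u]" using l1 len1_conv unfolding u_def by simp
    have "[u] \<in> set bins" using bu j0(1) by (metis nth_mem)
    then have uA: "u \<in> A" using good_item[OF gA finA, of "[u]" u] by simp
    have un: "u < n" using uA Asub by blast
    have fitu: "xs ! u + xs ! i \<le> 1" using j0(2) bu by simp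
    define bins' where "bins' = bins[j0 := [i, u]]"
    have e': "gstep xs bins (\<pi> t) = bins'" using e bu by (simp add: bins'_def i_def)
    have notLSu: "\<not> isLS xs [u]" by (simp add: isLS_def)
    have pl: "pLS xs bins' = pLS xs bins + (if isLS xs [i, u] then 1 else 0)"
      using pLS_update[OF j0(1), of "[i, u]"] bu notLSu by (simp add: bins'_def)
    have keep: "\<And>v. [v] \<in> set bins \<Longrightarrow> v \<noteq> u \<Longrightarrow> [v] \<in> set bins'"
      unfolding bins'_def using bu by (intro set_update_keep) auto
    have maxu: "\<And>v. [v] \<in> set bins \<Longrightarrow> xs ! v + xs ! i \<le> 1 \<Longrightarrow> xs ! v \<le> xs ! u"
    proof -
      fix v assume "[v] \<in> set bins" "xs ! v + xs ! i \<le> 1"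
      then obtain m where "m < length bins" "bins ! m = [v]" using in_bins by blast
      then show "xs ! v \<le> xs ! u" using mx[of m] \<open>xs ! v + xs ! i \<le> 1\<close> bu by simp
    qed
    show ?thesis
    proof (cases "xs ! i > 1/2")
      case True
      have Kc0: "Kc = {}" using Kc_small True by simp
      have us: "\<not> xs ! u > 1/2" using fitu True by linarith
      have pl1: "pLS xs bins' = pLS xs bins + 1" using pl True i(1) by (simp add: isLS_def)
      have PS': "Pend (Suc t) - (U \<union> Nw) = Pend t - U" using PS Kc0 NwP by auto
      have "card (U \<union> Nw) \<le> card U + 1" using card_Un_le[of U Nw] cNw by linarith
      then have "Cn (Suc t) + card (U \<union> Nw) \<le> pLS xs bins'" using CnS Kc0 cnt pl1 by simp
      moreover have "U \<union> Nw \<subseteq> Pend (Suc t)" using U PS Kc0 by auto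
      moreover have "\<forall>k\<in>Pend t - U. [f k] \<in> set bins' \<and> xs ! f k > 1/2 \<and> xs ! f k \<le> xs ! fst k"
        using cov keep us by fastforce
      ultimately show ?thesis unfolding e' using fi by (intro InvA_I[OF PS']) auto
    next
      case False
      have Nw0: "Nw = {}" using Nw_large False by simp
      show ?thesis
      proof (cases "xs ! u > 1/2")
        case False
        have pl0: "pLS xs bins' = pLS xs bins" using pl False \<open>\<not> xs ! i > 1/2\<close> by (simp add: isLS_def)
        have KcU: "Kc \<subseteq> U"
        proof
          fix k assume k: "k \<in> Kc"
          show "k \<in> U"
          proof (rule ccontr)
            assume "k \<notin> U"
            then have kP: "k \<in> Pend t - U" using k KcP by auto
            then have "xs ! f k + xs ! i \<le> 1" using cov Kcfit[OF k] by fastforce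
            then have "xs ! f k \<le> xs ! u" using maxu cov kP by blast
            then show False using cov kP False by fastforce
          qed
        qed
        have PS': "Pend (Suc t) - (U - Kc) = Pend t - U" using PS Nw0 KcU U by auto
        have "card (U - Kc) + card Kc = card U" using KcU finU card_Diff_subset finKc(1)
          by (metis card_mono le_add_diff_inverse2)
        then have "Cn (Suc t) + card (U - Kc) \<le> pLS xs bins'" using CnS cnt pl0 by simp
        moreover have "U - Kc \<subseteq> Pend (Suc t)" using U PS by auto
        moreover have "\<forall>k\<in>Pend t - U. [f k] \<in> set bins' \<and> xs ! f k > 1/2 \<and> xs ! f k \<le> xs ! fst k"
          using cov keep False by fastforce
        ultimately show ?thesis unfolding e' using fi by (intro InvA_I[OF PS']) auto
      next
        case True
        have pl1: "pLS xs bins' = pLS xs bins + 1" using pl True un by (simp add: isLS_def)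
        define K2 where "K2 = {k \<in> Pend t - U. f k = u}"
        have cK2: "card K2 \<le> 1"
        proof -
          have fin: "finite K2" using finPend by (simp add: K2_def)
          have "\<forall>x\<in>K2. \<forall>y\<in>K2. x = y" using fi by (auto simp: K2_def inj_on_def)
          then show ?thesis unfolding One_nat_def card_le_Suc0_iff_eq[OF fin] .
        qed
        show ?thesis
        proof (cases "\<exists>k\<in>Kc. k \<notin> U")
          case True
          then obtain k where kK: "k \<in> Kc" and kU: "k \<notin> U" by blast
          have "\<forall>a\<in>Kc. \<forall>b\<in>Kc. a = b" using cKc card_le_Suc0_iff_eq[OF finKc(1)] by simp
          then have Kc1: "Kc = {k}" using kK by blast
          have kP: "k \<in> Pend t - U" using kK kU KcP by auto
          define l' where "l' = f k"
          have l'c: "[l'] \<in> set bins" "xs ! l' > 1/2" "xs ! l' \<le> xs ! fst k" using cov[OF kP] by (simp_all add: l'_def)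
          have l'u: "xs ! l' \<le> xs ! u" using maxu[OF l'c(1)] l'c(3) Kcfit[OF kK] by linarith
          define f' where "f' = (\<lambda>k'. if f k' = u then l' else f k')"
          have PS': "Pend (Suc t) - U = Pend t - U - {k}" using PS Nw0 Kc1 by auto
          have "inj_on f' (Pend t - U - {k})"
          proof (rule inj_onI)
            fix k1 k2 assume k1: "k1 \<in> Pend t - U - {k}" and k2: "k2 \<in> Pend t - U - {k}" and eq: "f' k1 = f' k2"
            have d1: "f k1 \<noteq> l'" "f k2 \<noteq> l'" using k1 k2 kP fi unfolding l'_def inj_on_def by blast+
            show "k1 = k2"
            proof (cases "f k1 = u")
              case True
              then show ?thesis using eq d1 k1 k2 fi unfolding f'_def inj_on_def by (cases "f k2 = u") auto
            next
              case False
              then show ?thesis using eq d1 k1 k2 fi unfolding f'_def inj_on_def by (cases "f k2 = u") auto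
            qed
          qed
          moreover have "\<forall>k'\<in>Pend t - U - {k}. [f' k'] \<in> set bins' \<and> xs ! f' k' > 1/2 \<and> xs ! f' k' \<le> xs ! fst k'"
          proof
            fix k' assume k': "k' \<in> Pend t - U - {k}"
            have d: "f k' \<noteq> l'" using k' kP fi unfolding l'_def inj_on_def by blast
            show "[f' k'] \<in> set bins' \<and> xs ! f' k' > 1/2 \<and> xs ! f' k' \<le> xs ! fst k'"
            proof (cases "f k' = u")
              case True
              have "l' \<noteq> u" using d True by simp
              then show ?thesis using keep[OF l'c(1)] l'c(2) l'u cov[of k'] k' True by (auto simp: f'_def)
            next
              case False
              then show ?thesis using keep cov[of k'] k' by (auto simp: f'_def)
            qed
          qed
          moreover have "Cn (Suc t) + card U \<le> pLS xs bins'" using CnS Kc1 cnt pl1 by simp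
          moreover have "U \<subseteq> Pend (Suc t)" using U PS Kc1 kU by auto
          ultimately show ?thesis unfolding e' by (intro InvA_I[OF PS']) auto
        next
          case False
          then have KcU: "Kc \<subseteq> U" by blast
          define U' where "U' = (U - Kc) \<union> K2"
          have PS': "Pend (Suc t) - U' = Pend t - U - K2" using PS Nw0 KcU U by (auto simp: U'_def K2_def)
          have "card (U - Kc) + card Kc = card U" using KcU finU card_Diff_subset finKc(1)
            by (metis card_mono le_add_diff_inverse2)
          moreover have "card U' \<le> card (U - Kc) + card K2" unfolding U'_def by (rule card_Un_le)
          ultimately have "Cn (Suc t) + card U' \<le> pLS xs bins'" using CnS cnt pl1 cK2 by simp
          moreover have "U' \<subseteq> Pend (Suc t)" using U PS KcU Nw0 by (auto simp: U'_def K2_def)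
          moreover have "inj_on f (Pend t - U - K2)" using fi by (rule inj_on_subset) auto
          moreover have "\<forall>k\<in>Pend t - U - K2. [f k] \<in> set bins' \<and> xs ! f k > 1/2 \<and> xs ! f k \<le> xs ! fst k"
            using cov keep by (auto simp: K2_def)
          ultimately show ?thesis unfolding e' by (intro InvA_I[OF PS']) auto
        qed
      qed
    qed
  qed
qed

end

context stp begin

lemma InvA_gst: "t \<le> n \<Longrightarrow> InvA t (gst xs \<pi> t)"
proof (induction t)
  case 0
  have "Pend 0 = {}" by (simp add: Pend_def Arr_def)
  moreover have "Cn 0 = 0" by (simp add: Cn_def Arr_def)
  ultimately show ?case unfolding InvA_def by (intro exI[of _ "{}"]) simp
next
  case (Suc t)
  then have t: "t < n" by simp
  have g: "good xs (Arr t) (gst xs \<pi> t)" using gst_good[OF ok pp] t by (simp add: Arr_def)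
  show ?case unfolding gst_Suc by (rule InvA_step[OF t g Suc.IH]) (use t in simp)
qed

lemma final_good: "good xs {..<n} (gst xs \<pi> n)"
  using gst_good[OF ok pp, of n] perm_full[OF pp] by simp

definition "Xc = card {k\<in>M. inv \<pi> (fst k) < inv \<pi> (snd k)}"

lemma Xc_le: "Xc \<le> pLS xs (gst xs \<pi> n)"
proof -
  have An: "Arr n = {..<n}" using perm_full[OF pp] by (simp add: Arr_def)
  have "Pend n = {}" using Mprops by (auto simp: Pend_def An)
  moreover have "Cn n = Xc" unfolding Cn_def Xc_def An using Mprops by (intro arg_cong[where f=card]) auto
  ultimately show ?thesis using InvA_gst[of n] unfolding InvA_def by auto
qed

lemma L1:
  assumes allm: "snd ` M = {i. i < n \<and> \<not> xs ! i > 1/2}" and odd: "odd (nS xs)"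
  shows "1 \<le> pLS xs (gst xs \<pi> n)"
proof (rule ccontr)
  define bins where "bins = gst xs \<pi> n"
  assume "\<not> 1 \<le> pLS xs (gst xs \<pi> n)"
  then have p0: "pLS xs bins = 0" by (simp add: bins_def)
  have g: "good xs {..<n} bins" using final_good by (simp add: bins_def)
  note fc = final_count[OF g ok]
  have "length (filter (isS1 xs) bins) = 1"
  proof -
    have "even (2 * nL xs + nS xs + length (filter (isS1 xs) bins))" proof -
      have "2 * nL xs + nS xs + length (filter (isS1 xs) bins) = 2 * length bins" using fc(1) p0 by simp
      then show ?thesis by simp
    qed
    then have "odd (length (filter (isS1 xs) bins))" using odd by simp
    then show ?thesis using fc(2) by (cases "length (filter (isS1 xs) bins)") auto
  qed
  then obtain B where B: "B \<in> set bins" "isS1 xs B" by (metis length_0_conv filter_empty_conv zero_neq_one)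
  then have Bs: "B = [hd B]" by (simp add: isS1_def len1_conv)
  define s0 where "s0 = hd B"
  have s0: "B = [s0]" using Bs by (simp add: s0_def)
  have s0': "\<not> xs ! s0 > 1/2" using B(2) s0 by (simp add: isS1_def)
  have s0n: "s0 < n" using good_item[OF g _ B(1), of s0] s0 by auto
  then obtain k where k: "k \<in> M" "snd k = s0" using allm s0' by (metis (mono_tags, lifting) imageE mem_Collect_eq)
  define a where "a = fst k"
  have a: "a < n" "xs ! a > 1/2" "xs ! a + xs ! s0 \<le> 1" using Mprops[OF k(1)] k(2) by (auto simp: a_def)
  have "a \<in> set (concat bins)" using good_set[OF g] a(1) by simp
  then obtain B' where B': "B' \<in> set bins" "a \<in> set B'" by auto
  have "B' \<noteq> []" "length B' \<le> 2" using g B'(1) by (auto simp: good_def)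
  then have "length B' = 1 \<or> length B' = 2" by (cases B') (auto simp: le_Suc_eq)
  moreover have "\<not> isLS xs B'" using p0 B'(1) by (auto simp: pLS_def filter_empty_conv)
  ultimately have "length B' = 1" using B' a(2) by (auto simp: isLS_def)
  then have Ba: "B' = [a]" using B'(2) by (metis len1_conv One_nat_def empty_iff list.set(1) set_ConsD)
  obtain j where j: "j < length bins" "bins ! j = [s0]" using B(1) s0(1) by (metis in_set_conv_nth)
  obtain j' where j': "j' < length bins" "bins ! j' = [a]" using B'(1) Ba by (metis in_set_conv_nth)
  have "j \<noteq> j'" using j j' a(2) s0' by auto
  moreover have "length (bins ! j) = 1" "length (bins ! j') = 1" using j j' by simp_all
  ultimately have "ld xs (bins ! j) + ld xs (bins ! j') > 1" using g j(1) j'(1) unfolding good_def by blast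
  then show False using j j' a(3) by simp
qed

theorem det_bound:
  "\<exists>p. 2 * BF (permute_list_by \<pi> xs) + p \<le> 2 * nL xs + nS xs + 1 \<and> Xc \<le> p \<and>
     (snd ` M = {i. i < n \<and> \<not> xs ! i > 1/2} \<and> odd (nS xs) \<longrightarrow> 1 \<le> p)"
proof -
  have g: "good xs {..<n} (gst xs \<pi> n)" by (rule final_good)
  note fc = final_count[OF g ok]
  show ?thesis using fc Xc_le L1 unfolding BF_gst by (intro exI[of _ "pLS xs (gst xs \<pi> n)"]) auto
qed

end

lemma OPT_feasible: "okx xs \<Longrightarrow> \<exists>f. feasible_packing xs (OPT xs) f"
proof -
  assume ok: "okx xs"
  have "feasible_packing xs (length xs) id"
  proof -
    have "\<And>b. b < length xs \<Longrightarrow> {i. i < length xs \<and> id i = b} = {b}" by auto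
    then show ?thesis using ok unfolding feasible_packing_def okx_def by auto
  qed
  then have "\<exists>f. feasible_packing xs (length xs) f" by blast
  then show ?thesis unfolding OPT_def by (rule LeastI_ex[where P="\<lambda>k. \<exists>f. feasible_packing xs k f", OF exI[of _ "length xs"]])
qed

lemma sum_gt_card:
  fixes g :: "nat \<Rightarrow> real"
  assumes "finite X" "X \<noteq> {}" "\<And>x. x \<in> X \<Longrightarrow> g x > c"
  shows "sum g X > real (card X) * c"
proof -
  have "sum (\<lambda>_. c) X < sum g X" using assms by (intro sum_strict_mono) auto
  then show ?thesis by simp
qed

lemma OPT_bound:
  assumes ok: "okx xs"
  shows "\<exists>M. Mok xs M \<and> 2 * nL xs + nS xs \<le> 2 * OPT xs + card M"
proof -
  define n where "n = length xs"
  obtain f where fp: "feasible_packing xs (OPT xs) f" using OPT_feasible[OF ok] by blast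
  define K where "K = OPT xs"
  have fK: "\<And>i. i < n \<Longrightarrow> f i < K" using fp by (simp add: feasible_packing_def K_def n_def)
  have bin: "\<And>c. c < K \<Longrightarrow> (\<Sum>i\<in>{i. i < n \<and> f i = c}. xs ! i) \<le> 1"
    using fp by (simp add: feasible_packing_def K_def n_def)
  have pos: "\<And>i. i < n \<Longrightarrow> xs ! i > 1/3" using ok by (simp add: okx_def n_def)
  define L where "L = {i. i < n \<and> xs ! i > 1/2}"
  define S where "S = {i. i < n \<and> \<not> xs ! i > 1/2}"
  define M where "M = {(a, b). a \<in> L \<and> b \<in> S \<and> f a = f b}"
  have sub_le: "\<And>X c. X \<subseteq> {i. i < n \<and> f i = c} \<Longrightarrow> c < K \<Longrightarrow> sum ((!) xs) X \<le> 1"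
  proof -
    fix X c assume X: "X \<subseteq> {i. i < n \<and> f i = c}" "c < K"
    have "sum ((!) xs) X \<le> (\<Sum>i\<in>{i. i < n \<and> f i = c}. xs ! i)"
    proof (rule sum_mono2)
      show "finite {i. i < n \<and> f i = c}" by simp
      show "X \<subseteq> {i. i < n \<and> f i = c}" by (rule X(1))
      fix b assume "b \<in> {i. i < n \<and> f i = c} - X"
      then have "b < n" by simp
      then show "0 \<le> xs ! b" using pos[of b] by linarith
    qed
    then show "sum ((!) xs) X \<le> 1" using bin[OF X(2)] by linarith
  qed
  have cardI: "\<And>c. c < K \<Longrightarrow> card {i. i < n \<and> f i = c} \<le> 2"
  proof (rule ccontr)
    fix c assume c: "c < K" "\<not> card {i. i < n \<and> f i = c} \<le> 2"
    define X where "X = {i. i < n \<and> f i = c}"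
    have "finite X" by (simp add: X_def)
    moreover have "X \<noteq> {}" using c(2) unfolding X_def by (metis card.empty zero_le)
    ultimately have "sum ((!) xs) X > real (card X) * (1/3)" using pos by (intro sum_gt_card) (auto simp: X_def)
    moreover have "real (card X) \<ge> 3" using c by (simp add: X_def)
    ultimately show False using sub_le[of X c] c by (simp add: X_def) 
  qed
  have cardL: "\<And>c. c < K \<Longrightarrow> card {i\<in>L. f i = c} \<le> 1"
  proof (rule ccontr)
    fix c assume c: "c < K" "\<not> card {i\<in>L. f i = c} \<le> 1"
    define X where "X = {i\<in>L. f i = c}"
    have "finite X" by (simp add: X_def L_def)
    moreover have "X \<noteq> {}" using c(2) unfolding X_def by (metis card.empty zero_le)
    ultimately have "sum ((!) xs) X > real (card X) * (1/2)" by (intro sum_gt_card) (auto simp: X_def L_def)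
    moreover have "real (card X) \<ge> 2" using c by (simp add: X_def)
    moreover have "X \<subseteq> {i. i < n \<and> f i = c}" by (auto simp: X_def L_def)
    ultimately show False using sub_le[of X c] c by simp
  qed
  have finM: "finite M"
  proof -
    have "M \<subseteq> L \<times> S" by (auto simp: M_def)
    moreover have "finite (L \<times> S)" by (simp add: L_def S_def)
    ultimately show ?thesis by (rule finite_subset)
  qed
  have pairs: "\<And>a b. (a, b) \<in> M \<Longrightarrow> xs ! a + xs ! b \<le> 1"
  proof -
    fix a b assume ab: "(a, b) \<in> M"
    then have ab': "a < n" "b < n" "a \<noteq> b" "f a = f b" "f a < K" using fK by (auto simp: M_def L_def S_def)
    have "sum ((!) xs) {a, b} \<le> 1" using ab' by (intro sub_le[of _ "f a"]) auto
    then show "xs ! a + xs ! b \<le> 1" using ab'(3) by simp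
  qed
  have three: "\<And>a b b'. a < n \<Longrightarrow> b < n \<Longrightarrow> b' < n \<Longrightarrow> a \<noteq> b \<Longrightarrow> a \<noteq> b' \<Longrightarrow> b \<noteq> b'
       \<Longrightarrow> f a = f b \<Longrightarrow> f a = f b' \<Longrightarrow> False"
  proof -
    fix a b b' assume h: "a < n" "b < n" "b' < n" "a \<noteq> b" "a \<noteq> b'" "b \<noteq> b'" "f a = f b" "f a = f b'"
    have "{a, b, b'} \<subseteq> {i. i < n \<and> f i = f a}" using h by auto
    then have "card {a, b, b'} \<le> card {i. i < n \<and> f i = f a}" by (intro card_mono) auto
    then show False using cardI[OF fK[OF h(1)]] h by simp
  qed
  have Mmem: "\<And>a b. (a, b) \<in> M \<longleftrightarrow> a < n \<and> xs ! a > 1/2 \<and> b < n \<and> \<not> xs ! b > 1/2 \<and> f a = f b"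
    by (simp add: M_def L_def S_def)
  have injf: "inj_on fst M"
  proof (rule inj_onI)
    fix x y assume xy: "x \<in> M" "y \<in> M" "fst x = fst y"
    obtain a b where x: "x = (a, b)" by (cases x)
    obtain a' b' where y: "y = (a', b')" by (cases y)
    have h: "a < n" "xs ! a > 1/2" "b < n" "\<not> xs ! b > 1/2" "f a = f b"
      "b' < n" "\<not> xs ! b' > 1/2" "f a = f b'" "a = a'"
      using xy unfolding x y Mmem by auto
    have "b = b'"
    proof (rule ccontr)
      assume "b \<noteq> b'"
      moreover have "a \<noteq> b" "a \<noteq> b'" using h by auto
      ultimately show False using three[of a b b'] h by blast
    qed
    then show "x = y" using x y h by simp
  qed
  have injs: "inj_on snd M"
  proof (rule inj_onI)
    fix x y assume xy: "x \<in> M" "y \<in> M" "snd x = snd y"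
    obtain a b where x: "x = (a, b)" by (cases x)
    obtain a' b' where y: "y = (a', b')" by (cases y)
    have h: "a < n" "xs ! a > 1/2" "b < n" "\<not> xs ! b > 1/2" "f a = f b"
      "a' < n" "xs ! a' > 1/2" "f a' = f b" "b = b'"
      using xy unfolding x y Mmem by auto
    have "a = a'"
    proof (rule ccontr)
      assume "a \<noteq> a'"
      moreover have "b \<noteq> a" "b \<noteq> a'" using h by auto
      ultimately show False using three[of b a a'] h by simp
    qed
    then show "x = y" using x y h by simp
  qed
  have Mok: "Mok xs M" unfolding Mok_def using finM injf injs pairs by (auto simp: M_def L_def S_def n_def)
  have grp: "\<And>X h. finite X \<Longrightarrow> h ` X \<subseteq> {..<K} \<Longrightarrow> card X = (\<Sum>c<K. card {x\<in>X. h x = c})"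
  proof -
    fix X :: "'b set" and h assume "finite X" "h ` X \<subseteq> {..<K}"
    then have "(\<Sum>c\<in>{..<K}. sum (\<lambda>_. 1::nat) {x\<in>X. h x = c}) = sum (\<lambda>_. 1) X"
      by (intro sum.group) auto
    then show "card X = (\<Sum>c<K. card {x\<in>X. h x = c})" by simp
  qed
  have cL: "card L = (\<Sum>c<K. card {x\<in>L. f x = c})" using fK by (intro grp) (auto simp: L_def)
  have cS: "card S = (\<Sum>c<K. card {x\<in>S. f x = c})" using fK by (intro grp) (auto simp: S_def)
  have cM: "card M = (\<Sum>c<K. card {x\<in>M. (f \<circ> fst) x = c})" using fK finM by (intro grp) (auto simp: M_def L_def, metis)
  have per: "\<And>c. c < K \<Longrightarrow> 2 * card {x\<in>L. f x = c} + card {x\<in>S. f x = c} \<le> 2 + card {x\<in>M. (f \<circ> fst) x = c}"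
  proof -
    fix c assume c: "c < K"
    define Lc where "Lc = {x\<in>L. f x = c}"
    define Sc where "Sc = {x\<in>S. f x = c}"
    have "{x\<in>M. (f \<circ> fst) x = c} = Lc \<times> Sc" by (auto simp: M_def Lc_def Sc_def)
    then have cm: "card {x\<in>M. (f \<circ> fst) x = c} = card Lc * card Sc" by (simp add: card_cartesian_product)
    have "Lc \<union> Sc = {i. i < n \<and> f i = c}" "Lc \<inter> Sc = {}" by (auto simp: Lc_def Sc_def L_def S_def)
    moreover have "finite Lc" "finite Sc" by (simp_all add: Lc_def Sc_def L_def S_def)
    ultimately have "card Lc + card Sc = card {i. i < n \<and> f i = c}" by (metis card_Un_disjoint)
    then have ab: "card Lc + card Sc \<le> 2" using cardI[OF c] by simp
    have a1: "card Lc \<le> 1" using cardL[OF c] by (simp add: Lc_def)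
    have "2 * card Lc + card Sc \<le> 2 + card Lc * card Sc"
    proof (cases "card Lc = 0")
      case True then show ?thesis using ab by simp
    next
      case False then have "card Lc = 1" using a1 by simp
      then show ?thesis by simp
    qed
    then show "2 * card {x\<in>L. f x = c} + card {x\<in>S. f x = c} \<le> 2 + card {x\<in>M. (f \<circ> fst) x = c}"
      unfolding cm by (simp add: Lc_def Sc_def)
  qed
  have "2 * card L + card S \<le> (\<Sum>c<K. 2 + card {x\<in>M. (f \<circ> fst) x = c})"
  proof -
    have "2 * card L + card S = (\<Sum>c<K. 2 * card {x\<in>L. f x = c} + card {x\<in>S. f x = c})"
      unfolding cL cS by (simp add: sum_distrib_left sum.distrib)
    also have "\<dots> \<le> (\<Sum>c<K. 2 + card {x\<in>M. (f \<circ> fst) x = c})" by (intro sum_mono per) simp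
    finally show ?thesis .
  qed
  also have "\<dots> = 2 * K + card M" unfolding cM by (simp only: sum.distrib) simp
  finally show ?thesis using Mok by (intro exI[of _ M]) (simp add: nL_def nS_def L_def S_def K_def n_def)
qed

definition Perm :: "nat \<Rightarrow> (nat \<Rightarrow> nat) set" where
  "Perm n = {\<pi>. \<pi> permutes {..<n}}"

definition bef :: "(nat \<Rightarrow> nat) \<Rightarrow> nat \<Rightarrow> nat \<Rightarrow> bool" where
  "bef \<pi> a b \<longleftrightarrow> inv \<pi> a < inv \<pi> b"

lemma finite_Perm: "finite (Perm n)"
  unfolding Perm_def by (rule finite_permutations) simp

lemma card_Perm: "card (Perm n) = fact n"
  unfolding Perm_def by (rule card_permutations) simp_all

lemma swap_Perm: "a < n \<Longrightarrow> b < n \<Longrightarrow> \<pi> \<in> Perm n \<Longrightarrow> Transposition.transpose a b \<circ> \<pi> \<in> Perm n"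
  unfolding Perm_def by (auto intro!: permutes_compose permutes_swap_id)

lemma swap_inv: "\<pi> \<in> Perm n \<Longrightarrow> inv (Transposition.transpose a b \<circ> \<pi>) c = inv \<pi> (Transposition.transpose a b c)"
proof -
  assume "\<pi> \<in> Perm n"
  then have "bij \<pi>" unfolding Perm_def by (auto intro: permutes_bij)
  then have "inv (Transposition.transpose a b \<circ> \<pi>) = inv \<pi> \<circ> inv (Transposition.transpose a b)"
    by (intro o_inv_distrib) simp_all
  then show ?thesis by simp
qed

lemma swap_invol: "Transposition.transpose a b \<circ> (Transposition.transpose a b \<circ> \<pi>) = \<pi>"
  by (simp add: comp_assoc[symmetric])

lemma swap_bij: "a < n \<Longrightarrow> b < n \<Longrightarrow> bij_betw (\<lambda>\<pi>. Transposition.transpose a b \<circ> \<pi>) (Perm n) (Perm n)"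
  by (rule bij_betwI[where g="\<lambda>\<pi>. Transposition.transpose a b \<circ> \<pi>"]) (auto simp: swap_Perm swap_invol)

lemma sum_swap_Perm:
  assumes "a < n" "b < n"
  shows "(\<Sum>\<pi>\<in>Perm n. g (Transposition.transpose a b \<circ> \<pi>)) = (\<Sum>\<pi>\<in>Perm n. g \<pi>)"
  using sum.reindex_bij_betw[OF swap_bij[OF assms], of g] by simp

lemma inv_neq: "\<pi> \<in> Perm n \<Longrightarrow> a \<noteq> b \<Longrightarrow> inv \<pi> a \<noteq> inv \<pi> b"
proof
  assume p: "\<pi> \<in> Perm n" and ab: "a \<noteq> b" and e: "inv \<pi> a = inv \<pi> b"
  have pp: "\<pi> permutes {..<n}" using p by (simp add: Perm_def)
  have "\<pi> (inv \<pi> a) = \<pi> (inv \<pi> b)" using e by simp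
  then show False using ab permutes_inverses(1)[OF pp, of a] permutes_inverses(1)[OF pp, of b] by simp
qed

lemma halving:
  assumes ab: "a < n" "b < n" "a \<noteq> b"
    and Pinv: "\<And>\<pi>. \<pi> \<in> Perm n \<Longrightarrow> P (Transposition.transpose a b \<circ> \<pi>) = P \<pi>"
  shows "2 * card {\<pi>\<in>Perm n. P \<pi> \<and> bef \<pi> a b} = card {\<pi>\<in>Perm n. P \<pi>}"
proof -
  let ?\<tau> = "\<lambda>\<pi>. Transposition.transpose a b \<circ> \<pi>"
  let ?A = "{\<pi>\<in>Perm n. P \<pi> \<and> bef \<pi> a b}"
  let ?B = "{\<pi>\<in>Perm n. P \<pi> \<and> bef \<pi> b a}"
  have "bij_betw ?\<tau> ?A ?B"
  proof (rule bij_betwI[where g="?\<tau>"])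
    show "?\<tau> \<in> ?A \<rightarrow> ?B" using swap_Perm[OF ab(1,2)] Pinv swap_inv by (auto simp: bef_def)
    show "?\<tau> \<in> ?B \<rightarrow> ?A" using swap_Perm[OF ab(1,2)] Pinv swap_inv by (auto simp: bef_def)
  qed (simp_all add: swap_invol)
  then have cAB: "card ?A = card ?B" by (rule bij_betw_same_card)
  have "{\<pi>\<in>Perm n. P \<pi>} = ?A \<union> ?B"
  proof (intro set_eqI iffI)
    fix x assume x: "x \<in> {\<pi>\<in>Perm n. P \<pi>}"
    then have "inv x a \<noteq> inv x b" using inv_neq[of x n a b] ab(3) by simp
    then have "bef x a b \<or> bef x b a" unfolding bef_def by linarith
    then show "x \<in> ?A \<union> ?B" using x by blast
  qed blast
  moreover have "?A \<inter> ?B = {}" by (auto simp: bef_def)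
  moreover have "finite ?A" "finite ?B" using finite_Perm by simp_all
  ultimately have "card {\<pi>\<in>Perm n. P \<pi>} = card ?A + card ?B" by (simp add: card_Un_disjoint)
  then show ?thesis using cAB by simp
qed

lemma per_perm:
  assumes ok: "okx xs" and mok: "Mok xs M" and p: "\<pi> \<in> Perm (length xs)"
  shows "2 * BF (permute_list_by \<pi> xs) + card {k\<in>M. bef \<pi> (fst k) (snd k)} \<le> 2 * nL xs + nS xs + 1"
    and "snd ` M = {i. i < length xs \<and> \<not> xs ! i > 1/2} \<Longrightarrow> odd (nS xs) \<Longrightarrow>
           2 * BF (permute_list_by \<pi> xs) + 1 \<le> 2 * nL xs + nS xs + 1"
proof -
  interpret stp xs \<pi> M using ok p mok by unfold_locales (simp_all add: Perm_def)
  obtain q where q: "2 * BF (permute_list_by \<pi> xs) + q \<le> 2 * nL xs + nS xs + 1" "Xc \<le> q"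
    "snd ` M = {i. i < length xs \<and> \<not> xs ! i > 1/2} \<and> odd (nS xs) \<longrightarrow> 1 \<le> q"
    using det_bound by blast
  have "Xc = card {k\<in>M. bef \<pi> (fst k) (snd k)}" by (simp add: Xc_def bef_def)
  then show "2 * BF (permute_list_by \<pi> xs) + card {k\<in>M. bef \<pi> (fst k) (snd k)} \<le> 2 * nL xs + nS xs + 1"
    using q by linarith
  show "snd ` M = {i. i < length xs \<and> \<not> xs ! i > 1/2} \<Longrightarrow> odd (nS xs) \<Longrightarrow>
           2 * BF (permute_list_by \<pi> xs) + 1 \<le> 2 * nL xs + nS xs + 1" using q by linarith
qed

lemma card_filter_sum: "finite A \<Longrightarrow> card {x\<in>A. Q x} = (\<Sum>x\<in>A. if Q x then 1 else 0 :: nat)"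
  by (simp add: sum.If_cases Int_def)

lemma pair_disj:
  assumes mok: "Mok xs M" and k: "k \<in> M" and k': "k' \<in> M" and ne: "k \<noteq> k'"
  shows "fst k' \<noteq> fst k" "fst k' \<noteq> snd k" "snd k' \<noteq> fst k" "snd k' \<noteq> snd k"
proof -
  have inj: "inj_on fst M" "inj_on snd M" using mok by (simp_all add: Mok_def)
  have pr: "\<And>k. k \<in> M \<Longrightarrow> xs ! fst k > 1/2 \<and> \<not> xs ! snd k > 1/2" using mok by (simp add: Mok_def)
  show "fst k' \<noteq> fst k" using inj(1) k k' ne by (auto simp: inj_on_def)
  show "snd k' \<noteq> snd k" using inj(2) k k' ne by (auto simp: inj_on_def)
  show "fst k' \<noteq> snd k" using pr[OF k] pr[OF k'] by auto
  show "snd k' \<noteq> fst k" using pr[OF k] pr[OF k'] by auto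
qed

lemma Mpair: "Mok xs M \<Longrightarrow> k \<in> M \<Longrightarrow> fst k < length xs \<and> snd k < length xs \<and> fst k \<noteq> snd k"
  unfolding Mok_def by force

lemma bef_swap_other:
  assumes "\<pi> \<in> Perm n" "c \<noteq> a" "c \<noteq> b" "d \<noteq> a" "d \<noteq> b"
  shows "bef (Transposition.transpose a b \<circ> \<pi>) c d = bef \<pi> c d"
  using assms by (simp add: bef_def swap_inv)

lemma bef_swap_self:
  assumes "\<pi> \<in> Perm n"
  shows "bef (Transposition.transpose a b \<circ> \<pi>) a b = bef \<pi> b a"
  using assms by (simp add: bef_def swap_inv)

lemma sum_X:
  assumes mok: "Mok xs M" and sub: "M' \<subseteq> M"
  shows "2 * (\<Sum>\<pi>\<in>Perm (length xs). card {k\<in>M'. bef \<pi> (fst k) (snd k)}) = card M' * fact (length xs)"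
proof -
  define n where "n = length xs"
  have finM': "finite M'" using mok sub finite_subset by (auto simp: Mok_def)
  have "(\<Sum>\<pi>\<in>Perm n. card {k\<in>M'. bef \<pi> (fst k) (snd k)})
      = (\<Sum>\<pi>\<in>Perm n. \<Sum>k\<in>M'. if bef \<pi> (fst k) (snd k) then 1 else 0)"
    using finM' by (simp add: card_filter_sum)
  also have "\<dots> = (\<Sum>k\<in>M'. \<Sum>\<pi>\<in>Perm n. if bef \<pi> (fst k) (snd k) then 1 else 0)" by (rule sum.swap)
  also have "\<dots> = (\<Sum>k\<in>M'. card {\<pi>\<in>Perm n. bef \<pi> (fst k) (snd k)})"
    using finite_Perm by (simp add: card_filter_sum)
  finally have e: "(\<Sum>\<pi>\<in>Perm n. card {k\<in>M'. bef \<pi> (fst k) (snd k)}) = (\<Sum>k\<in>M'. card {\<pi>\<in>Perm n. bef \<pi> (fst k) (snd k)})" .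
  have "\<And>k. k \<in> M' \<Longrightarrow> 2 * card {\<pi>\<in>Perm n. bef \<pi> (fst k) (snd k)} = fact n"
  proof -
    fix k assume "k \<in> M'"
    then have "k \<in> M" using sub by blast
    then have k: "fst k < n" "snd k < n" "fst k \<noteq> snd k" using Mpair[OF mok] n_def by blast+
    have "2 * card {\<pi>\<in>Perm n. True \<and> bef \<pi> (fst k) (snd k)} = card {\<pi>\<in>Perm n. True}"
      by (rule halving[OF k]) simp
    then show "2 * card {\<pi>\<in>Perm n. bef \<pi> (fst k) (snd k)} = fact n" by (simp add: card_Perm)
  qed
  then have "2 * (\<Sum>k\<in>M'. card {\<pi>\<in>Perm n. bef \<pi> (fst k) (snd k)}) = (\<Sum>k\<in>M'. fact n)"
    by (simp add: sum_distrib_left)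
  then show ?thesis using e by (simp add: n_def)
qed

lemma all_bef:
  assumes mok: "Mok xs M" and sub: "M0 \<subseteq> M"
  shows "card {\<pi>\<in>Perm (length xs). \<forall>k\<in>M0. bef \<pi> (fst k) (snd k)} * 2 ^ card M0 = fact (length xs)"
proof -
  define n where "n = length xs"
  have fin: "finite M0" using mok sub finite_subset by (auto simp: Mok_def)
  have "card {\<pi>\<in>Perm n. \<forall>k\<in>M0. bef \<pi> (fst k) (snd k)} * 2 ^ card M0 = fact n"
    using fin sub
  proof (induction M0 rule: finite_induct)
    case empty then show ?case by (simp add: card_Perm)
  next
    case (insert k F)
    have kM: "k \<in> M" using insert by simp
    have k: "fst k < n" "snd k < n" "fst k \<noteq> snd k" using Mpair[OF mok kM] n_def by auto
    let ?P = "\<lambda>\<pi>. \<forall>k'\<in>F. bef \<pi> (fst k') (snd k')"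
    have inv: "\<And>\<pi>. \<pi> \<in> Perm n \<Longrightarrow> ?P (Transposition.transpose (fst k) (snd k) \<circ> \<pi>) = ?P \<pi>"
    proof -
      fix \<pi> assume p: "\<pi> \<in> Perm n"
      have "\<And>k'. k' \<in> F \<Longrightarrow> bef (Transposition.transpose (fst k) (snd k) \<circ> \<pi>) (fst k') (snd k') = bef \<pi> (fst k') (snd k')"
      proof -
        fix k' assume k'F: "k' \<in> F"
        then have "k' \<in> M" "k \<noteq> k'" using insert by auto
        note d = pair_disj[OF mok kM this]
        show "bef (Transposition.transpose (fst k) (snd k) \<circ> \<pi>) (fst k') (snd k') = bef \<pi> (fst k') (snd k')"
          by (rule bef_swap_other[OF p d])
      qed
      then show "?P (Transposition.transpose (fst k) (snd k) \<circ> \<pi>) = ?P \<pi>" by auto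
    qed
    have h: "2 * card {\<pi>\<in>Perm n. ?P \<pi> \<and> bef \<pi> (fst k) (snd k)} = card {\<pi>\<in>Perm n. ?P \<pi>}"
      using halving[OF k(1) k(2) k(3), where P = "?P"] inv by blast
    have se: "{\<pi>\<in>Perm n. \<forall>k'\<in>insert k F. bef \<pi> (fst k') (snd k')} = {\<pi>\<in>Perm n. ?P \<pi> \<and> bef \<pi> (fst k) (snd k)}"
      by auto
    have ci: "card (insert k F) = Suc (card F)" using insert by simp
    have IH: "card {\<pi>\<in>Perm n. ?P \<pi>} * 2 ^ card F = fact n" using insert by simp
    have "card {\<pi>\<in>Perm n. ?P \<pi> \<and> bef \<pi> (fst k) (snd k)} * 2 ^ Suc (card F)
        = (2 * card {\<pi>\<in>Perm n. ?P \<pi> \<and> bef \<pi> (fst k) (snd k)}) * 2 ^ card F" by simp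
    also have "\<dots> = fact n" using h IH by simp
    finally show ?case unfolding se ci .
  qed
  then show ?thesis by (simp add: n_def)
qed

lemma sum_le_pointwise_pair:
  fixes g h :: "(nat \<Rightarrow> nat) \<Rightarrow> nat"
  assumes "\<And>\<pi>. \<pi> \<in> A \<Longrightarrow> g \<pi> + h \<pi> \<le> c"
  shows "sum g A + sum h A \<le> card A * c"
proof -
  have "sum g A + sum h A = (\<Sum>\<pi>\<in>A. g \<pi> + h \<pi>)" by (simp add: sum.distrib)
  also have "\<dots> \<le> (\<Sum>\<pi>\<in>A. c)" using assms by (intro sum_mono) auto
  finally show ?thesis by simp
qed

lemma general_case:
  assumes ok: "okx xs" and mok: "Mok xs M" and m1: "m1 \<in> M"
    and bound: "2 * nL xs + nS xs \<le> 2 * K + card M" and big: "4 * (card M + 1) \<le> 5 * K"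
  shows "(\<Sum>\<pi>\<in>Perm (length xs). real (BF (permute_list_by \<pi> xs))) \<le> 21/16 * real K * fact (length xs)"
proof -
  define n where "n = length xs"
  define a1 where "a1 = fst m1"
  define b1 where "b1 = snd m1"
  define M' where "M' = M - {m1}"
  define B where "B = (\<lambda>\<pi>. BF (permute_list_by \<pi> xs))"
  define X' where "X' = (\<lambda>\<pi>. card {k\<in>M'. bef \<pi> (fst k) (snd k)})"
  define \<tau> where "\<tau> = (\<lambda>\<pi>::nat\<Rightarrow>nat. Transposition.transpose a1 b1 \<circ> \<pi>)"
  define R where "R = 2 * nL xs + nS xs"
  have ab: "a1 < n" "b1 < n" "a1 \<noteq> b1" using Mpair[OF mok m1] by (simp_all add: a1_def b1_def n_def)
  have finM: "finite M" using mok by (simp add: Mok_def)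
  have splitX: "\<And>\<pi>. card {k\<in>M. bef \<pi> (fst k) (snd k)} = X' \<pi> + (if bef \<pi> a1 b1 then 1 else 0)"
  proof -
    fix \<pi>
    have "{k\<in>M. bef \<pi> (fst k) (snd k)} = {k\<in>M'. bef \<pi> (fst k) (snd k)} \<union> (if bef \<pi> a1 b1 then {m1} else {})"
      using m1 by (auto simp: M'_def a1_def b1_def)
    moreover have "{k\<in>M'. bef \<pi> (fst k) (snd k)} \<inter> (if bef \<pi> a1 b1 then {m1} else {}) = {}"
      by (auto simp: M'_def)
    moreover have "finite {k\<in>M'. bef \<pi> (fst k) (snd k)}" using finM by (simp add: M'_def)
    ultimately show "card {k\<in>M. bef \<pi> (fst k) (snd k)} = X' \<pi> + (if bef \<pi> a1 b1 then 1 else 0)"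
      unfolding X'_def by (simp add: card_Un_disjoint)
  qed
  have X'sw: "\<And>\<pi>. \<pi> \<in> Perm n \<Longrightarrow> X' (\<tau> \<pi>) = X' \<pi>"
  proof -
    fix \<pi> assume p: "\<pi> \<in> Perm n"
    have "{k\<in>M'. bef (\<tau> \<pi>) (fst k) (snd k)} = {k\<in>M'. bef \<pi> (fst k) (snd k)}"
    proof (intro Collect_cong conj_cong refl)
      fix k assume "k \<in> M'"
      then have "k \<in> M" "m1 \<noteq> k" by (auto simp: M'_def)
      note d = pair_disj[OF mok m1 this]
      show "bef (\<tau> \<pi>) (fst k) (snd k) = bef \<pi> (fst k) (snd k)"
        unfolding \<tau>_def using d by (intro bef_swap_other[OF p]) (auto simp: a1_def b1_def)
    qed
    then show "X' (\<tau> \<pi>) = X' \<pi>" by (simp add: X'_def)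
  qed
  have pw: "\<And>\<pi>. \<pi> \<in> Perm n \<Longrightarrow> B \<pi> + B (\<tau> \<pi>) + X' \<pi> \<le> R"
  proof -
    fix \<pi> assume p: "\<pi> \<in> Perm n"
    have tp: "\<tau> \<pi> \<in> Perm n" unfolding \<tau>_def using swap_Perm[OF ab(1,2) p] .
    have h1: "2 * B \<pi> + card {k\<in>M. bef \<pi> (fst k) (snd k)} \<le> R + 1"
      using per_perm(1)[OF ok mok, of \<pi>] p by (simp add: B_def R_def n_def)
    have h2: "2 * B (\<tau> \<pi>) + card {k\<in>M. bef (\<tau> \<pi>) (fst k) (snd k)} \<le> R + 1"
      using per_perm(1)[OF ok mok, of "\<tau> \<pi>"] tp by (simp add: B_def R_def n_def)
    have bs: "bef (\<tau> \<pi>) a1 b1 = bef \<pi> b1 a1" unfolding \<tau>_def by (rule bef_swap_self[OF p])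
    have one: "(if bef \<pi> a1 b1 then 1 else 0) + (if bef \<pi> b1 a1 then 1 else 0) = (1::nat)"
      using inv_neq[OF p ab(3)] unfolding bef_def by auto
    have "2 * (B \<pi> + B (\<tau> \<pi>) + X' \<pi>) + 1 \<le> 2 * R + 2"
      using h1 h2 splitX[of \<pi>] splitX[of "\<tau> \<pi>"] X'sw[OF p] bs one by simp
    then show "B \<pi> + B (\<tau> \<pi>) + X' \<pi> \<le> R" by presburger
  qed
  have sB: "(\<Sum>\<pi>\<in>Perm n. B (\<tau> \<pi>)) = (\<Sum>\<pi>\<in>Perm n. B \<pi>)"
    unfolding \<tau>_def by (rule sum_swap_Perm[OF ab(1,2)])
  have "(\<Sum>\<pi>\<in>Perm n. B \<pi> + B (\<tau> \<pi>)) + (\<Sum>\<pi>\<in>Perm n. X' \<pi>) \<le> card (Perm n) * R"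
    by (rule sum_le_pointwise_pair) (use pw in auto)
  then have s1: "2 * (\<Sum>\<pi>\<in>Perm n. B \<pi>) + (\<Sum>\<pi>\<in>Perm n. X' \<pi>) \<le> fact n * R"
    using sB by (simp add: sum.distrib card_Perm)
  have s2: "2 * (\<Sum>\<pi>\<in>Perm n. X' \<pi>) = card M' * fact n"
    unfolding X'_def n_def by (rule sum_X[OF mok]) (auto simp: M'_def)
  have "card M > 0" using m1 finM card_gt_0_iff by blast
  then have cM': "card M' + 1 = card M" using m1 finM by (simp add: M'_def)
  define S where "S = (\<Sum>\<pi>\<in>Perm n. B \<pi>)"
  define N where "N = (fact n :: nat)"
  have "4 * S + card M' * N \<le> 2 * N * R" using s1 s2 unfolding S_def N_def by linarith
  then have r1: "4 * real S + real (card M') * real N \<le> 2 * real N * real R"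
    by (metis (mono_tags) of_nat_add of_nat_le_iff of_nat_mult of_nat_numeral)
  have r2: "real R \<le> 2 * real K + real (card M)" using bound unfolding R_def
    by (metis of_nat_add of_nat_le_iff of_nat_mult of_nat_numeral)
  have r3: "4 * real (card M) + 4 \<le> 5 * real K" using big
    by (metis (mono_tags) distrib_left mult.right_neutral of_nat_add of_nat_le_iff of_nat_mult of_nat_numeral of_nat_1)
  have r4: "real (card M') + 1 = real (card M)" using cM' by (metis of_nat_1 of_nat_add)
  have Npos: "real N \<ge> 0" by simp
  have "4 * real S \<le> real N * (2 * real R - real (card M'))" using r1 by (simp add: algebra_simps)
  also have "\<dots> \<le> real N * (4 * real K + real (card M) + 1)"
    using r2 r4 Npos by (intro mult_left_mono) auto
  also have "\<dots> \<le> real N * (21/4 * real K)"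
    using r3 Npos by (intro mult_left_mono) auto
  finally have "real S \<le> 21/16 * real K * real N" by (simp add: algebra_simps)
  then show ?thesis unfolding S_def N_def B_def n_def by simp
qed

lemma bf_nofit: "(\<forall>j<length L. L ! j + x > 1) \<Longrightarrow> bf_step L x = L @ [x]"
  unfolding bf_step_def Let_def by (auto simp: not_le)

lemma bf_fit_len:
  assumes "j < length L" "L ! j + x \<le> 1"
  shows "length (bf_step L x) = length L"
proof -
  have "{j. j < length L \<and> L ! j + x \<le> 1} \<noteq> {}" using assms by auto
  then show ?thesis unfolding bf_step_def Let_def by simp
qed

lemma bf_single:
  assumes "a + x \<le> (1::real)"
  shows "bf_step [a] x = [a + x]"
proof -
  have F: "{j. j < length [a] \<and> [a] ! j + x \<le> 1} = {0}" using assms by auto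
  have L: "(LEAST j. j \<in> {0::nat} \<and> [a] ! j = a) = 0" by (rule Least_equality) auto
  show ?thesis unfolding bf_step_def Let_def F by (simp add: L)
qed

lemma BF4:
  assumes "x0 > 1/3" "x1 > 1/3" "x2 > 1/3" "x3 > 1/3" "x0 + x1 \<le> 1" "x2 + x3 \<le> 1"
  shows "BF [x0, x1, x2, x3] = 2"
proof -
  have s1: "bf_step [] x0 = [x0]" by (simp add: bf_nofit)
  have s2: "bf_step [x0] x1 = [x0 + x1]" using assms by (simp add: bf_single)
  have s3: "bf_step [x0 + x1] x2 = [x0 + x1, x2]" using bf_nofit[of "[x0 + x1]" x2] assms by simp
  have s4: "length (bf_step [x0 + x1, x2] x3) = 2" using assms by (subst bf_fit_len[of 1]) auto
  show ?thesis unfolding BF_def using s1 s2 s3 s4 by simp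
qed

definition pi4 :: "nat \<Rightarrow> nat \<Rightarrow> nat \<Rightarrow> nat \<Rightarrow> nat \<Rightarrow> nat" where
  "pi4 w0 w1 w2 w3 = (\<lambda>i. if i = 0 then w0 else if i = 1 then w1 else if i = 2 then w2 else if i = 3 then w3 else i)"

lemma lt4: "(i::nat) < 4 \<longleftrightarrow> i = 0 \<or> i = 1 \<or> i = 2 \<or> i = 3" by auto

lemma pi4_Perm:
  assumes "distinct [w0, w1, w2, w3]" "w0 < 4" "w1 < 4" "w2 < 4" "w3 < 4"
  shows "pi4 w0 w1 w2 w3 \<in> Perm 4"
proof -
  let ?p = "pi4 w0 w1 w2 w3"
  have inj: "inj_on ?p {..<4}"
  proof (rule inj_onI)
    fix x y assume "x \<in> {..<4}" "y \<in> {..<4}" and e: "?p x = ?p y"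
    then have "x = 0 \<or> x = 1 \<or> x = 2 \<or> x = 3" "y = 0 \<or> y = 1 \<or> y = 2 \<or> y = 3"
      by (simp_all only: lessThan_iff lt4)
    then show "x = y" using e assms(1) unfolding pi4_def by auto
  qed
  have im: "?p ` {..<4} \<subseteq> {..<4}"
  proof
    fix y assume "y \<in> ?p ` {..<4}"
    then obtain x where x: "x < 4" "y = ?p x" by auto
    then have "x = 0 \<or> x = 1 \<or> x = 2 \<or> x = 3" by (simp only: lt4)
    then show "y \<in> {..<4}" using x(2) assms(2-5) unfolding pi4_def by auto
  qed
  have "?p ` {..<4} = {..<4}" by (rule endo_inj_surj[OF _ im inj]) simp
  then have "bij_betw ?p {..<4} {..<4}" using inj by (simp add: bij_betw_def)
  moreover have "\<And>x. x \<notin> {..<4} \<Longrightarrow> ?p x = x" unfolding pi4_def by auto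
  ultimately show ?thesis unfolding Perm_def by (auto intro: bij_imp_permutes)
qed

lemma pi4_inv:
  assumes "distinct [w0, w1, w2, w3]" "w0 < 4" "w1 < 4" "w2 < 4" "w3 < 4"
  shows "inv (pi4 w0 w1 w2 w3) w0 = 0" "inv (pi4 w0 w1 w2 w3) w1 = 1"
proof -
  have pp: "pi4 w0 w1 w2 w3 permutes {..<4}" using pi4_Perm[OF assms] by (simp add: Perm_def)
  show "inv (pi4 w0 w1 w2 w3) w0 = 0" using permutes_inverses(2)[OF pp, of 0] by (simp add: pi4_def)
  show "inv (pi4 w0 w1 w2 w3) w1 = 1" using permutes_inverses(2)[OF pp, of 1] by (simp add: pi4_def)
qed

lemma pi4_list:
  assumes "length xs = 4"
  shows "permute_list_by (pi4 w0 w1 w2 w3) xs = [xs ! w0, xs ! w1, xs ! w2, xs ! w3]"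
proof -
  have "[0..<4] = [0, 1, 2, 3::nat]" by (simp add: upt_rec)
  then show ?thesis using assms unfolding permute_list_by_def by (simp add: pi4_def)
qed

lemma sum_bound_G:
  fixes B :: "(nat \<Rightarrow> nat) \<Rightarrow> nat"
  assumes fin: "finite A" and G: "G \<subseteq> A" and all: "\<And>\<pi>. \<pi> \<in> A \<Longrightarrow> B \<pi> \<le> c"
    and gd: "\<And>\<pi>. \<pi> \<in> G \<Longrightarrow> B \<pi> + 1 \<le> c"
  shows "sum B A + card G \<le> card A * c"
proof -
  have cG: "card G = (\<Sum>\<pi>\<in>A. if \<pi> \<in> G then 1 else 0)"
  proof -
    have "card {\<pi>\<in>A. \<pi> \<in> G} = (\<Sum>\<pi>\<in>A. if \<pi> \<in> G then 1 else 0)" by (rule card_filter_sum[OF fin])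
    moreover have "{\<pi>\<in>A. \<pi> \<in> G} = G" using G by auto
    ultimately show ?thesis by simp
  qed
  have "sum B A + card G = (\<Sum>\<pi>\<in>A. B \<pi> + (if \<pi> \<in> G then 1 else 0))" unfolding cG by (simp add: sum.distrib)
  also have "\<dots> \<le> (\<Sum>\<pi>\<in>A. c)" using all gd by (intro sum_mono) auto
  finally show ?thesis by simp
qed

lemma real_sum_nat: "(\<Sum>\<pi>\<in>A. real (B \<pi>)) = real (sum B A)" by simp

theorem proposition2:
  fixes xs :: "real list"
  assumes "\<forall>x\<in>set xs. 1/3 < x \<and> x \<le> 1"
  shows "expected_BF_random_order xs \<le> 21/16 * real (OPT xs)"
proof -
  define n where "n = length xs"
  have ok: "okx xs" using assms unfolding okx_def by auto
  obtain M where mok: "Mok xs M" and bound: "2 * nL xs + nS xs \<le> 2 * OPT xs + card M"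
    using OPT_bound[OF ok] by blast
  define K where "K = OPT xs"
  define q where "q = card M"
  define B where "B = (\<lambda>\<pi>. BF (permute_list_by \<pi> xs))"
  define N where "N = (fact n :: nat)"
  define S where "S = sum B (Perm n)"
  have PE: "{\<sigma>. \<sigma> permutes {0..<length xs}} = Perm n" by (simp add: Perm_def n_def atLeast0LessThan)
  have Npos: "N > 0" by (simp add: N_def)
  have exp: "expected_BF_random_order xs = real S / real N"
    unfolding expected_BF_random_order_def PE S_def B_def N_def
    by (simp add: card_Perm)
  have finM: "finite M" using mok by (simp add: Mok_def)
  define Ls where "Ls = {i. i < n \<and> xs ! i > 1/2}"
  define Ss where "Ss = {i. i < n \<and> \<not> xs ! i > 1/2}"
  have nL: "nL xs = card Ls" by (simp add: nL_def Ls_def n_def)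
  have nS: "nS xs = card Ss" by (simp add: nS_def Ss_def n_def)
  have sndM: "snd ` M \<subseteq> Ss" using mok by (auto simp: Mok_def Ss_def n_def)
  have fstM: "fst ` M \<subseteq> Ls" using mok by (auto simp: Mok_def Ls_def n_def)
  have cs: "card (snd ` M) = q" using mok by (simp add: Mok_def card_image q_def)
  have cf: "card (fst ` M) = q" using mok by (simp add: Mok_def card_image q_def)
  have qS: "q \<le> nS xs" unfolding nS using card_mono[OF _ sndM] cs by (simp add: Ss_def)
  have qL: "q \<le> nL xs" unfolding nL using card_mono[OF _ fstM] cf by (simp add: Ls_def)
  have bound': "2 * nL xs + nS xs \<le> 2 * K + q" using bound by (simp add: K_def q_def)
  have LK: "nL xs \<le> K" using bound' qS by linarith
  have pp1: "\<And>\<pi>. \<pi> \<in> Perm n \<Longrightarrow> 2 * B \<pi> + card {k\<in>M. bef \<pi> (fst k) (snd k)} \<le> 2 * nL xs + nS xs + 1"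
    using per_perm(1)[OF ok mok] by (simp add: B_def n_def)
  have goal: "real S \<le> 21/16 * real K * real N"
  proof (cases "q = 0")
    case True
    have "\<And>\<pi>. \<pi> \<in> Perm n \<Longrightarrow> B \<pi> \<le> K" using pp1 bound' True by fastforce
    then have "S \<le> card (Perm n) * K" unfolding S_def using sum_bounded_above[of "Perm n" B K] by simp
    then have "S \<le> N * K" by (simp add: card_Perm N_def)
        then have "real S \<le> real N * real K" by (metis of_nat_le_iff of_nat_mult)
    then show ?thesis by (simp add: algebra_simps)
  next
    case qpos: False
    show ?thesis
    proof (cases "4 * (q + 1) \<le> 5 * K")
      case True
      have "M \<noteq> {}" using qpos q_def by auto
      then obtain m1 where m1: "m1 \<in> M" by blast
      show ?thesis using general_case[OF ok mok m1 bound, folded K_def q_def, OF True]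
        by (simp add: S_def B_def N_def n_def)
    next
      case False
      have Kq: "K = q" using False qL LK by presburger
      have Lq: "nL xs = q" using Kq qL LK by linarith
      have Sq: "nS xs = q" using bound' Kq Lq qS by linarith
      have q3: "q \<le> 3" using False Kq by presburger
      have allm: "snd ` M = {i. i < length xs \<and> \<not> xs ! i > 1/2}"
      proof -
        have "snd ` M = Ss" using card_subset_eq[OF _ sndM] cs Sq nS by (simp add: Ss_def)
        then show ?thesis by (simp add: Ss_def n_def)
      qed
      have pp2: "\<And>\<pi>. \<pi> \<in> Perm n \<Longrightarrow> odd q \<Longrightarrow> 2 * B \<pi> + 1 \<le> 2 * nL xs + nS xs + 1"
        using per_perm(2)[OF ok mok _ allm] Sq by (simp add: B_def n_def)
      define G where "G = {\<pi>\<in>Perm n. \<forall>k\<in>M. bef \<pi> (fst k) (snd k)}"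
      have cG: "card G * 2 ^ q = N" using all_bef[OF mok order_refl] by (simp add: G_def q_def N_def n_def)
      have GX: "\<And>\<pi>. \<pi> \<in> G \<Longrightarrow> card {k\<in>M. bef \<pi> (fst k) (snd k)} = q"
      proof -
        fix \<pi> assume "\<pi> \<in> G"
        then have "{k\<in>M. bef \<pi> (fst k) (snd k)} = M" by (auto simp: G_def)
        then show "card {k\<in>M. bef \<pi> (fst k) (snd k)} = q" by (simp add: q_def)
      qed
      have GP: "G \<subseteq> Perm n" by (auto simp: G_def)
      consider "q = 1" | "q = 2" | "q = 3" using q3 qpos by linarith
      then show ?thesis
      proof cases
        case 1
        have "\<And>\<pi>. \<pi> \<in> Perm n \<Longrightarrow> B \<pi> \<le> K" using pp2 Lq Sq Kq 1 by fastforce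
        then have "S \<le> card (Perm n) * K" unfolding S_def using sum_bounded_above[of "Perm n" B K] by simp
        then have "S \<le> N * K" by (simp add: card_Perm N_def)
        then have "real S \<le> real N * real K" by (metis of_nat_le_iff of_nat_mult)
        then show ?thesis by (simp add: algebra_simps)
      next
        case 3
        have a: "\<And>\<pi>. \<pi> \<in> Perm n \<Longrightarrow> B \<pi> \<le> 4" using pp2 Lq Sq 3 by fastforce
        have b: "\<And>\<pi>. \<pi> \<in> G \<Longrightarrow> B \<pi> + 1 \<le> 4" using pp1 GX GP Lq Sq 3 by fastforce
        have "S + card G \<le> card (Perm n) * 4" unfolding S_def
          by (rule sum_bound_G[OF finite_Perm GP a b])
        then have "S + card G \<le> N * 4" by (simp add: card_Perm N_def)
        moreover have "card G * 8 = N" using cG 3 by simp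
        ultimately have "S \<le> 31 * card G" by linarith
        then have "real S \<le> 31 * real (card G)" by (metis of_nat_le_iff of_nat_mult of_nat_numeral)
        moreover have "real N = 8 * real (card G)" using \<open>card G * 8 = N\<close> by (metis of_nat_mult of_nat_numeral mult.commute)
        ultimately have "real S \<le> 21/16 * 3 * real N" by simp
        then show ?thesis using Kq 3 by simp
      next
        case 2
        have n4: "n = 4" using Lq Sq 2 unfolding n_def nL nS Ls_def Ss_def
        proof -
          have "{i. i < length xs} = Ls \<union> Ss" "Ls \<inter> Ss = {}" by (auto simp: Ls_def Ss_def n_def)
          then have "card {i. i < length xs} = card Ls + card Ss" by (simp add: card_Un_disjoint Ls_def Ss_def)
          then show "length xs = 4" using Lq Sq 2 nL nS by simp
        qed
        obtain m1 m2 where M12: "M = {m1, m2}" "m1 \<noteq> m2" using 2 q_def card_2_iff by metis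
        have m1: "m1 \<in> M" and m2: "m2 \<in> M" using M12 by auto
        define a1 where "a1 = fst m1"
        define b1 where "b1 = snd m1"
        define a2 where "a2 = fst m2"
        define b2 where "b2 = snd m2"
        note d = pair_disj[OF mok m1 m2 M12(2)]
        have p1: "a1 < 4" "b1 < 4" "a1 \<noteq> b1" using Mpair[OF mok m1] n4 n_def by (auto simp: a1_def b1_def)
        have p2: "a2 < 4" "b2 < 4" "a2 \<noteq> b2" using Mpair[OF mok m2] n4 n_def by (auto simp: a2_def b2_def)
        have dd: "a2 \<noteq> a1" "a2 \<noteq> b1" "b2 \<noteq> a1" "b2 \<noteq> b1" using d by (simp_all add: a1_def a2_def b1_def b2_def)
        have c1: "xs ! a1 + xs ! b1 \<le> 1" "xs ! a2 + xs ! b2 \<le> 1" using mok m1 m2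
          by (auto simp: Mok_def a1_def a2_def b1_def b2_def)
        have gt: "\<And>i. i < 4 \<Longrightarrow> xs ! i > 1/3" using ok n4 by (simp add: okx_def n_def)
        define \<pi>1 where "\<pi>1 = pi4 b1 a1 a2 b2"
        define \<pi>2 where "\<pi>2 = pi4 b1 a1 b2 a2"
        define \<pi>3 where "\<pi>3 = pi4 b2 a2 a1 b1"
        have D1: "distinct [b1, a1, a2, b2]" "distinct [b1, a1, b2, a2]" "distinct [b2, a2, a1, b1]"
          using p1 p2 dd by auto
        have P1: "\<pi>1 \<in> Perm n" "\<pi>2 \<in> Perm n" "\<pi>3 \<in> Perm n"
          unfolding \<pi>1_def \<pi>2_def \<pi>3_def n4 using pi4_Perm D1 p1 p2 by auto
        have len: "length xs = 4" using n4 n_def by simp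
        have B1: "B \<pi>1 = 2" unfolding B_def \<pi>1_def pi4_list[OF len]
          using gt p1 p2 c1 by (intro BF4) (auto simp: add.commute)
        have B2: "B \<pi>2 = 2" unfolding B_def \<pi>2_def pi4_list[OF len]
          using gt p1 p2 c1 by (intro BF4) (auto simp: add.commute)
        have B3: "B \<pi>3 = 2" unfolding B_def \<pi>3_def pi4_list[OF len]
          using gt p1 p2 c1 by (intro BF4) (auto simp: add.commute)
        have nG1: "\<pi>1 \<notin> G" "\<pi>2 \<notin> G"
        proof -
          have "inv \<pi>1 b1 = 0" "inv \<pi>1 a1 = 1" using pi4_inv[OF D1(1)] p1 p2 by (simp_all add: \<pi>1_def)
          then have "\<not> bef \<pi>1 (fst m1) (snd m1)" by (simp add: bef_def a1_def b1_def)
          then show "\<pi>1 \<notin> G" using m1 by (auto simp: G_def)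
          have "inv \<pi>2 b1 = 0" "inv \<pi>2 a1 = 1" using pi4_inv[OF D1(2)] p1 p2 by (simp_all add: \<pi>2_def)
          then have "\<not> bef \<pi>2 (fst m1) (snd m1)" by (simp add: bef_def a1_def b1_def)
          then show "\<pi>2 \<notin> G" using m1 by (auto simp: G_def)
        qed
        have nG3: "\<pi>3 \<notin> G"
        proof -
          have "inv \<pi>3 b2 = 0" "inv \<pi>3 a2 = 1" using pi4_inv[OF D1(3)] p1 p2 by (simp_all add: \<pi>3_def)
          then have "\<not> bef \<pi>3 (fst m2) (snd m2)" by (simp add: bef_def a2_def b2_def)
          then show "\<pi>3 \<notin> G" using m2 by (auto simp: G_def)
        qed
        have dp: "\<pi>1 \<noteq> \<pi>2" "\<pi>1 \<noteq> \<pi>3" "\<pi>2 \<noteq> \<pi>3"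
        proof -
          show "\<pi>1 \<noteq> \<pi>2" using p2 by (auto simp: \<pi>1_def \<pi>2_def pi4_def fun_eq_iff dest!: spec[of _ 2])
          show "\<pi>1 \<noteq> \<pi>3" using dd by (auto simp: \<pi>1_def \<pi>3_def pi4_def fun_eq_iff dest!: spec[of _ 0])
          show "\<pi>2 \<noteq> \<pi>3" using dd by (auto simp: \<pi>2_def \<pi>3_def pi4_def fun_eq_iff dest!: spec[of _ 0])
        qed
        define G' where "G' = G \<union> {\<pi>1, \<pi>2, \<pi>3}"
        have finG: "finite G" using finite_Perm GP finite_subset by blast
        have cG': "card G' = card G + 3" unfolding G'_def using nG1 nG3 dp finG
          by (simp add: card_insert_if)
        have G'P: "G' \<subseteq> Perm n" using GP P1 by (auto simp: G'_def)
        have a: "\<And>\<pi>. \<pi> \<in> Perm n \<Longrightarrow> B \<pi> \<le> 3" using pp1 Lq Sq 2 by fastforce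
        have b: "\<And>\<pi>. \<pi> \<in> G' \<Longrightarrow> B \<pi> + 1 \<le> 3"
        proof -
          fix \<pi> assume "\<pi> \<in> G'"
          then consider "\<pi> \<in> G" | "\<pi> = \<pi>1" | "\<pi> = \<pi>2" | "\<pi> = \<pi>3" by (auto simp: G'_def)
          then show "B \<pi> + 1 \<le> 3"
          proof cases
            case 1 then show ?thesis using pp1[of \<pi>] GX[of \<pi>] GP Lq Sq 2 by fastforce
          qed (simp_all add: B1 B2 B3)
        qed
        have "S + card G' \<le> card (Perm n) * 3" unfolding S_def
          by (rule sum_bound_G[OF finite_Perm G'P a b])
        moreover have "card (Perm n) = 24" using n4 by (simp add: card_Perm fact_numeral)
        moreover have "card G * 4 = 24" using cG 2 n4 by (simp add: N_def fact_numeral)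
        ultimately have "S \<le> 63" using cG' by linarith
        moreover have "N = 24" using n4 by (simp add: N_def fact_numeral)
        ultimately show ?thesis using Kq 2 by simp
      qed
    qed
  qed
  have "real S / real N \<le> 21/16 * real K"
    using goal Npos by (simp add: divide_le_eq algebra_simps)
  then show ?thesis using exp by (simp add: K_def)
qed

end
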